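(* Let $S=K[x_1,\dots,x_n]$ be a standard graded polynomial ring over a field $K$ and let $q_1,\dots,q_m\in S$ be homogeneous quadrics forming a regular sequence. Then $R=S/(q_1,\dots,q_m)$ is LG-quadratic; explicitly, with $A=R[y_1,\dots,y_m]/(y_1^2+q_1,\dots,y_m^2+q_m)$ (new variables $y_i$ of degree $1$), $A$ is G-quadratic, $y_1,\dots,y_m$ is a regular sequence on $A$, and $R\cong A/(y_1,\dots,y_m)$.
   Context: A standard graded $K$-algebra $R$ (a quotient $S/I$ of a standard graded polynomial ring $S$ by a homogeneous ideal $I$ containing no linear forms) is G-quadratic if $I$ has a Gröbner basis consisting of quadrics with respect to some choice of linear coordinates of $S_1$ and some term order on $S$. $R$ is LG-quadratic if there exist a G-quadratic algebra $A$ and a regular sequence $y_1,\dots,y_c$ of linear forms of $A$ with $R\cong A/(y_1,\dots,y_c)$. *)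

theory Defs
  imports "HOL-Library.Poly_Mapping"
begin

text \<open>The polynomial ring S_n = K[x_0,...,x_{n-1}] is the set of polynomials
  only involving the variables x_i with i < n.\<close>

type_synonym monom = "nat \<Rightarrow>\<^sub>0 nat"
type_synonym 'k mpoly = "monom \<Rightarrow>\<^sub>0 'k"

definition Var :: "nat \<Rightarrow> 'k::field mpoly" where
  "Var i = Poly_Mapping.single (Poly_Mapping.single i 1) 1"

definition mdeg :: "monom \<Rightarrow> nat" where
  "mdeg m = (\<Sum>i\<in>Poly_Mapping.keys m. Poly_Mapping.lookup m i)"

definition polyring :: "nat \<Rightarrow> 'k::field mpoly set" where
  "polyring n = {p. \<forall>m\<in>Poly_Mapping.keys p. Poly_Mapping.keys m \<subseteq> {..<n}}"

definition homogeneous :: "nat \<Rightarrow> 'k::field mpoly \<Rightarrow> bool" where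
  "homogeneous d p \<longleftrightarrow> (\<forall>m\<in>Poly_Mapping.keys p. mdeg m = d)"

definition hpart :: "nat \<Rightarrow> 'k::field mpoly \<Rightarrow> 'k mpoly" where
  "hpart d p = (\<Sum>m\<in>{m\<in>Poly_Mapping.keys p. mdeg m = d}. Poly_Mapping.single m (Poly_Mapping.lookup p m))"

text \<open>linear forms / quadrics of S_n (homogeneous of degree 1 / 2; 0 is allowed)\<close>
definition linear_form :: "nat \<Rightarrow> 'k::field mpoly \<Rightarrow> bool" where
  "linear_form n p \<longleftrightarrow> p \<in> polyring n \<and> homogeneous 1 p"

definition quadric :: "nat \<Rightarrow> 'k::field mpoly \<Rightarrow> bool" where
  "quadric n p \<longleftrightarrow> p \<in> polyring n \<and> homogeneous 2 p"

definition ideal_gen :: "nat \<Rightarrow> 'k::field mpoly set \<Rightarrow> 'k mpoly set" where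
  "ideal_gen n G = {p. \<exists>F c. finite F \<and> F \<subseteq> G \<and> (\<forall>g\<in>F. c g \<in> polyring n)
                          \<and> p = (\<Sum>g\<in>F. c g * g)}"

definition is_ideal :: "nat \<Rightarrow> 'k::field mpoly set \<Rightarrow> bool" where
  "is_ideal n I \<longleftrightarrow> I \<subseteq> polyring n \<and> 0 \<in> I \<and> (\<forall>p\<in>I. \<forall>q\<in>I. p + q \<in> I)
                    \<and> (\<forall>p\<in>I. \<forall>r\<in>polyring n. r * p \<in> I)"

definition homogeneous_ideal :: "nat \<Rightarrow> 'k::field mpoly set \<Rightarrow> bool" where
  "homogeneous_ideal n I \<longleftrightarrow> is_ideal n I \<and> (\<forall>p\<in>I. \<forall>d. hpart d p \<in> I)"

text \<open>S_n/I is a standard graded K-algebra presentation: I homogeneous,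
  containing no (nonzero) linear forms\<close>
definition std_graded :: "nat \<Rightarrow> 'k::field mpoly set \<Rightarrow> bool" where
  "std_graded n I \<longleftrightarrow> homogeneous_ideal n I \<and> (\<forall>p\<in>I. linear_form n p \<longrightarrow> p = 0)"

definition subst :: "(nat \<Rightarrow> 'k::field mpoly) \<Rightarrow> 'k mpoly \<Rightarrow> 'k mpoly" where
  "subst \<sigma> p = (\<Sum>m\<in>Poly_Mapping.keys p. Poly_Mapping.single 0 (Poly_Mapping.lookup p m) *
                    (\<Prod>i\<in>Poly_Mapping.keys m. \<sigma> i ^ Poly_Mapping.lookup m i))"

definition coord_change :: "nat \<Rightarrow> (nat \<Rightarrow> 'k::field mpoly) \<Rightarrow> bool" where
  "coord_change n \<sigma> \<longleftrightarrow> (\<forall>i<n. linear_form n (\<sigma> i)) \<and>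
     (\<exists>\<tau>. (\<forall>i<n. linear_form n (\<tau> i)) \<and> (\<forall>i<n. subst \<tau> (\<sigma> i) = Var i)
          \<and> (\<forall>i<n. subst \<sigma> (\<tau> i) = Var i))"

definition term_order :: "nat \<Rightarrow> (monom \<Rightarrow> monom \<Rightarrow> bool) \<Rightarrow> bool" where
  "term_order n ord \<longleftrightarrow>
     (let M = {m. Poly_Mapping.keys m \<subseteq> {..<n}} in
       (\<forall>a\<in>M. ord a a) \<and>
       (\<forall>a\<in>M. \<forall>b\<in>M. ord a b \<and> ord b a \<longrightarrow> a = b) \<and>
       (\<forall>a\<in>M. \<forall>b\<in>M. \<forall>c\<in>M. ord a b \<and> ord b c \<longrightarrow> ord a c) \<and>
       (\<forall>a\<in>M. \<forall>b\<in>M. ord a b \<or> ord b a) \<and>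
       (\<forall>a\<in>M. ord 0 a) \<and>
       (\<forall>a\<in>M. \<forall>b\<in>M. \<forall>c\<in>M. ord a b \<longrightarrow> ord (a + c) (b + c)))"

definition lead_monom :: "(monom \<Rightarrow> monom \<Rightarrow> bool) \<Rightarrow> 'k::field mpoly \<Rightarrow> monom" where
  "lead_monom ord p = (THE m. m \<in> Poly_Mapping.keys p \<and> (\<forall>m'\<in>Poly_Mapping.keys p. ord m' m))"

definition groebner_basis :: "(monom \<Rightarrow> monom \<Rightarrow> bool) \<Rightarrow> 'k::field mpoly set \<Rightarrow> 'k mpoly set \<Rightarrow> bool" where
  "groebner_basis ord G I \<longleftrightarrow> finite G \<and> G \<subseteq> I \<and>
     (\<forall>f\<in>I. f \<noteq> 0 \<longrightarrow> (\<exists>g\<in>G. g \<noteq> 0 \<and> (\<exists>u. lead_monom ord f = lead_monom ord g + u)))"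

definition G_quadratic :: "nat \<Rightarrow> 'k::field mpoly set \<Rightarrow> bool" where
  "G_quadratic n I \<longleftrightarrow> std_graded n I \<and>
     (\<exists>\<sigma> ord G. coord_change n \<sigma> \<and> term_order n ord \<and> (\<forall>g\<in>G. quadric n g) \<and>
        groebner_basis ord G (subst \<sigma> ` I))"

definition regular_seq :: "nat \<Rightarrow> 'k::field mpoly set \<Rightarrow> 'k mpoly list \<Rightarrow> bool" where
  "regular_seq n J ys \<longleftrightarrow> set ys \<subseteq> polyring n \<and>
     1 \<notin> ideal_gen n (J \<union> set ys) \<and>
     (\<forall>i<length ys. \<forall>f\<in>polyring n.
        ys ! i * f \<in> ideal_gen n (J \<union> set (take i ys)) \<longrightarrow> f \<in> ideal_gen n (J \<union> set (take i ys)))"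

text \<open>Isomorphism of standard graded K-algebras S_n/I and S_N/J, given by
  graded K-algebra maps induced by linear substitutions, mutually inverse.\<close>
definition graded_iso :: "nat \<Rightarrow> 'k::field mpoly set \<Rightarrow> nat \<Rightarrow> 'k mpoly set \<Rightarrow> bool" where
  "graded_iso n I N J \<longleftrightarrow>
     (\<exists>\<phi> \<psi>. (\<forall>i<n. linear_form N (\<phi> i)) \<and> (\<forall>i<N. linear_form n (\<psi> i)) \<and>
        subst \<phi> ` I \<subseteq> J \<and> subst \<psi> ` J \<subseteq> I \<and>
        (\<forall>i<n. subst \<psi> (\<phi> i) - Var i \<in> I) \<and>
        (\<forall>i<N. subst \<phi> (\<psi> i) - Var i \<in> J))"

definition LG_quadratic :: "nat \<Rightarrow> 'k::field mpoly set \<Rightarrow> bool" where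
  "LG_quadratic n I \<longleftrightarrow> std_graded n I \<and>
     (\<exists>N J ys. G_quadratic N J \<and> (\<forall>y\<in>set ys. linear_form N y) \<and>
        regular_seq N J ys \<and> graded_iso n I N (ideal_gen N (J \<union> set ys)))"

end

theory Submission
  imports Defs
begin


abbreviation "lk \<equiv> Poly_Mapping.lookup"
abbreviation "ks \<equiv> Poly_Mapping.keys"
abbreviation "sg \<equiv> Poly_Mapping.single"

lemma lookup_single_mult: "lk (sg 0 c * (p::'k::field mpoly)) a = c * lk p a"
proof -
  have "sg 0 c * p = Poly_Mapping.map ((*) c) p" by (simp add: mult_map_scale_conv_mult)
  then show ?thesis by (simp add: Poly_Mapping.map.rep_eq when_def)
qed

lemma poly_decomp: "(p::'k::field mpoly) = (\<Sum>a\<in>ks p. sg a (lk p a))"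
proof (rule poly_mapping_eqI)
  fix k
  show "lk p k = lk (\<Sum>a\<in>ks p. sg a (lk p a)) k"
    by (cases "k \<in> ks p") (auto simp: lookup_sum lookup_single when_def in_keys_iff)
qed

lemma sg0_mult: "sg 0 (c*d) = sg 0 c * (sg 0 d :: 'k::field mpoly)"
  by (simp add: mult_single)

definition lin :: "(monom \<Rightarrow> 'k::field mpoly) \<Rightarrow> 'k mpoly \<Rightarrow> 'k mpoly" where
  "lin h p = (\<Sum>a\<in>ks p. sg 0 (lk p a) * h a)"

lemma lin_superset: "finite K \<Longrightarrow> ks p \<subseteq> K \<Longrightarrow> lin h p = (\<Sum>a\<in>K. sg 0 (lk p a) * h a)"
  unfolding lin_def by (rule sum.mono_neutral_left) (auto simp: in_keys_iff)

lemma lin_add: "lin h (p + q) = lin h p + lin h q"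
proof -
  let ?K = "ks p \<union> ks q"
  have "ks (p+q) \<subseteq> ?K" by (rule keys_add)
  then have "lin h (p+q) = (\<Sum>a\<in>?K. sg 0 (lk (p+q) a) * h a)" by (simp add: lin_superset)
  also have "\<dots> = (\<Sum>a\<in>?K. sg 0 (lk p a) * h a) + (\<Sum>a\<in>?K. sg 0 (lk q a) * h a)"
    by (simp add: lookup_add single_add distrib_right sum.distrib)
  also have "\<dots> = lin h p + lin h q" using lin_superset[of ?K p h] lin_superset[of ?K q h] by simp
  finally show ?thesis .
qed

lemma lin_zero[simp]: "lin h 0 = 0" by (simp add: lin_def)

lemma lin_uminus: "lin h (- p) = - lin h p"
  by (metis add_eq_0_iff lin_add lin_zero)

lemma lin_diff: "lin h (p - q) = lin h p - lin h q"
  by (metis diff_conv_add_uminus lin_add lin_uminus)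

lemma lin_sum: "lin h (\<Sum>i\<in>I. f i) = (\<Sum>i\<in>I. lin h (f i))"
  by (induction I rule: infinite_finite_induct) (auto simp: lin_add)

lemma lin_single: "lin h (sg a c) = sg 0 c * h a"
  by (cases "c = 0") (auto simp: lin_def)

lemma lin_scalar: "lin h (sg 0 c * p) = sg 0 c * lin h p"
proof -
  have "lin h (sg 0 c * p) = (\<Sum>a\<in>ks p. sg 0 (lk (sg 0 c * p) a) * h a)"
    by (rule lin_superset) (auto simp: lookup_single_mult in_keys_iff)
  also have "\<dots> = sg 0 c * lin h p"
    unfolding lin_def by (simp add: lookup_single_mult sum_distrib_left mult.assoc sg0_mult)
  finally show ?thesis .
qed

lemma mult_single_sum: "(p::'k::field mpoly) * sg c 1 = (\<Sum>a\<in>ks p. sg (a + c) (lk p a))"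
proof -
  have "p * sg c 1 = (\<Sum>a\<in>ks p. sg a (lk p a)) * sg c 1" by (subst poly_decomp, rule refl)
  also have "\<dots> = (\<Sum>a\<in>ks p. sg (a + c) (lk p a))" by (simp add: sum_distrib_right mult_single)
  finally show ?thesis .
qed

lemma lin_mult_single:
  assumes "\<And>a. h (a + c) = t * h a"
  shows "lin h (p * sg c 1) = t * lin h p"
proof -
  have "lin h (p * sg c 1) = (\<Sum>a\<in>ks p. sg 0 (lk p a) * h (a + c))"
    by (simp add: mult_single_sum lin_sum lin_single)
  also have "\<dots> = t * lin h p" by (simp add: assms lin_def sum_distrib_left ac_simps)
  finally show ?thesis .
qed

lemma lin_mult:
  fixes p s :: "'k::field mpoly"
  assumes "\<And>a b. b \<in> ks s \<Longrightarrow> h (a + b) = T b * h a"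
  shows "lin h (p * s) = (\<Sum>b\<in>ks s. sg 0 (lk s b) * T b) * lin h p"
proof -
  have e: "p * sg b c = sg 0 c * (p * sg b 1)" for b c
  proof -
    have "sg b c = sg 0 c * sg b (1::'k)" by (simp add: mult_single)
    then show ?thesis by (simp add: ac_simps)
  qed
  have "p * s = p * (\<Sum>b\<in>ks s. sg b (lk s b))" by (subst (1) poly_decomp[of s], rule refl)
  also have "\<dots> = (\<Sum>b\<in>ks s. sg 0 (lk s b) * (p * sg b 1))"
    unfolding sum_distrib_left by (rule sum.cong[OF refl], rule e)
  finally have "lin h (p * s) = (\<Sum>b\<in>ks s. sg 0 (lk s b) * (T b * lin h p))"
    by (simp add: lin_sum lin_scalar, intro sum.cong refl arg_cong2[where f="(*)"] lin_mult_single assms, simp)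
  then show ?thesis by (simp add: sum_distrib_right sum_distrib_left ac_simps)
qed


lemma lookup_minus_nat: "lk (a - b) k = lk a k - lk (b :: monom) k"
  by (simp add: minus_poly_mapping.rep_eq)

lemma monom_decomp: "(a::monom) = (\<Sum>i\<in>ks a. sg i (lk a i))"
proof (rule poly_mapping_eqI)
  fix k
  show "lk a k = lk (\<Sum>i\<in>ks a. sg i (lk a i)) k"
    by (cases "k \<in> ks a") (auto simp: lookup_sum lookup_single when_def in_keys_iff)
qed

lemma mdeg_superset: "finite K \<Longrightarrow> ks a \<subseteq> K \<Longrightarrow> mdeg a = (\<Sum>i\<in>K. lk a i)"
  unfolding mdeg_def by (rule sum.mono_neutral_left) (auto simp: in_keys_iff)

lemma mdeg_add: "mdeg (a+b) = mdeg a + mdeg b"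
proof -
  let ?K = "ks a \<union> ks b"
  have "ks (a+b) \<subseteq> ?K" by (rule keys_add)
  then have "mdeg (a+b) = (\<Sum>i\<in>?K. lk (a+b) i)" by (simp add: mdeg_superset)
  also have "\<dots> = (\<Sum>i\<in>?K. lk a i) + (\<Sum>i\<in>?K. lk b i)" by (simp add: lookup_add sum.distrib)
  also have "\<dots> = mdeg a + mdeg b" using mdeg_superset[of ?K a] mdeg_superset[of ?K b] by simp
  finally show ?thesis .
qed

lemma mdeg_single[simp]: "mdeg (sg i k) = k"
  by (cases "k = 0") (auto simp: mdeg_def)

lemma mdeg_zero[simp]: "mdeg 0 = 0"
  by (simp add: mdeg_def)

lemma lin_cong: "(\<And>a. a \<in> ks p \<Longrightarrow> h a = h' a) \<Longrightarrow> lin h p = lin h' p"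
  unfolding lin_def by (rule sum.cong) auto

lemma sg0_mult_single: "sg 0 c * sg a 1 = (sg a c :: 'k::field mpoly)"
  by (simp add: mult_single)

lemma lin_id: "lin (\<lambda>a. sg a 1) p = p"
  unfolding lin_def by (simp add: sg0_mult_single flip: poly_decomp)

lemma lin_mult_right: "lin h p * c = lin (\<lambda>a. h a * c) p"
  unfolding lin_def by (simp add: sum_distrib_right mult.assoc)

lemma lin_add_fun: "lin (\<lambda>a. h a + h' a) p = lin h p + lin h' p"
  unfolding lin_def by (simp add: distrib_left sum.distrib)

lemma lin_zero_fun[simp]: "lin (\<lambda>a. 0) p = 0"
  unfolding lin_def by simp

lemma lin_comp: "lin g (lin h p) = lin (\<lambda>a. lin g (h a)) p"
  unfolding lin_def[of h] by (simp add: lin_sum lin_scalar lin_def[of "\<lambda>a. lin g (h a)"])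

lemma lin_mult_single_gen: "lin h (p * sg c 1) = lin (\<lambda>a. h (a + c)) p"
  unfolding mult_single_sum lin_sum lin_single lin_def[of "\<lambda>a. h (a + c)"] by simp

lemma lin_mult_gen:
  fixes p s :: "'k::field mpoly"
  shows "lin h (p * s) = (\<Sum>b\<in>ks s. sg 0 (lk s b) * lin (\<lambda>a. h (a + b)) p)"
proof -
  have e: "p * sg b c = sg 0 c * (p * sg b 1)" for b c
  proof -
    have "sg b c = sg 0 c * sg b (1::'k)" by (simp add: mult_single)
    then show ?thesis by (simp add: ac_simps)
  qed
  have "p * s = p * (\<Sum>b\<in>ks s. sg b (lk s b))" by (subst (1) poly_decomp[of s], rule refl)
  also have "\<dots> = (\<Sum>b\<in>ks s. sg 0 (lk s b) * (p * sg b 1))"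
    unfolding sum_distrib_left by (rule sum.cong[OF refl], rule e)
  finally show ?thesis
    by (simp add: lin_sum lin_scalar lin_mult_single_gen)
qed

lemma keys_single_mult: "ks (sg 0 c * (x::'k::field mpoly)) \<subseteq> ks x"
  by (auto simp: in_keys_iff lookup_single_mult)

lemma keys_lin: "ks (lin h p) \<subseteq> (\<Union>a\<in>ks p. ks (h a))"
proof -
  have "ks (lin h p) \<subseteq> (\<Union>a\<in>ks p. ks (sg 0 (lk p a) * h a))"
    unfolding lin_def by (rule keys_sum)
  also have "\<dots> \<subseteq> (\<Union>a\<in>ks p. ks (h a))" using keys_single_mult by blast
  finally show ?thesis .
qed

lemma lookup_lin: "lk (lin h p) M = (\<Sum>a\<in>ks p. lk p a * lk (h a) M)"
  unfolding lin_def by (simp add: lookup_sum lookup_single_mult)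

lemma polyring_iff: "p \<in> polyring N \<longleftrightarrow> (\<forall>a\<in>ks p. ks a \<subseteq> {..<N})"
  by (simp add: polyring_def)

lemma polyring_zero[simp]: "0 \<in> polyring N" by (simp add: polyring_iff)

lemma polyring_single: "ks a \<subseteq> {..<N} \<Longrightarrow> sg a c \<in> polyring N"
  by (simp add: polyring_iff)

lemma polyring_one[simp]: "1 \<in> polyring N"
  unfolding single_one[symmetric] by (rule polyring_single) simp

lemma polyring_add: "p \<in> polyring N \<Longrightarrow> q \<in> polyring N \<Longrightarrow> p + q \<in> polyring N"
  unfolding polyring_iff by (auto dest!: subsetD[OF keys_add])

lemma polyring_mult: "p \<in> polyring N \<Longrightarrow> q \<in> polyring N \<Longrightarrow> p * q \<in> polyring N"
  unfolding polyring_iff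
proof
  fix c assume p: "\<forall>a\<in>ks p. ks a \<subseteq> {..<N}" and q: "\<forall>a\<in>ks q. ks a \<subseteq> {..<N}"
    and c: "c \<in> ks (p * q)"
  then obtain a b where "c = a + b" "a \<in> ks p" "b \<in> ks q" using keys_mult by blast
  then show "ks c \<subseteq> {..<N}" using p q subsetD[OF keys_add[of a b]] by fastforce
qed

lemma polyring_uminus: "p \<in> polyring N \<Longrightarrow> - p \<in> polyring N"
  by (simp add: polyring_iff)

lemma polyring_diff: "p \<in> polyring N \<Longrightarrow> q \<in> polyring N \<Longrightarrow> p - q \<in> polyring N"
  by (metis diff_conv_add_uminus polyring_add polyring_uminus)

lemma polyring_sum: "(\<And>i. i \<in> I \<Longrightarrow> f i \<in> polyring N) \<Longrightarrow> (\<Sum>i\<in>I. f i) \<in> polyring N"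
  by (induction I rule: infinite_finite_induct) (auto simp: polyring_add)

lemma polyring_pow: "p \<in> polyring N \<Longrightarrow> p ^ k \<in> polyring N"
  by (induction k) (auto simp: polyring_mult)

lemma polyring_prod: "(\<And>i. i \<in> I \<Longrightarrow> f i \<in> polyring N) \<Longrightarrow> (\<Prod>i\<in>I. f i) \<in> polyring N"
  by (induction I rule: infinite_finite_induct) (auto simp: polyring_mult)

lemma polyring_mono: "p \<in> polyring N \<Longrightarrow> N \<le> N' \<Longrightarrow> p \<in> polyring N'"
  unfolding polyring_iff by fastforce

lemma polyring_lin: "(\<And>a. a \<in> ks p \<Longrightarrow> h a \<in> polyring N) \<Longrightarrow> lin h p \<in> polyring N"
  unfolding polyring_iff using subsetD[OF keys_lin] by fastforce

lemma Var_pow: "Var i ^ k = (sg (sg i k) 1 :: 'k::field mpoly)"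
proof (induction k)
  case 0 then show ?case by simp
next
  case (Suc k)
  have "Var i ^ Suc k = Var i * (sg (sg i k) 1 :: 'k mpoly)" using Suc by simp
  also have "\<dots> = sg (sg i 1 + sg i k) 1" unfolding Var_def mult_single by simp
  also have "sg i 1 + sg i k = sg i (Suc k)" by (simp only: single_add[symmetric] plus_1_eq_Suc)
  finally show ?case .
qed

lemma Var_polyring: "i < N \<Longrightarrow> Var i \<in> polyring N"
  by (simp add: Var_def polyring_single)

lemma prod_single: "(\<Prod>i\<in>I. sg (f i) 1) = (sg (\<Sum>i\<in>I. f i) 1 :: 'k::field mpoly)"
  by (induction I rule: infinite_finite_induct) (simp_all add: mult_single)

lemma Var_prod: "(\<Prod>i\<in>ks a. Var i ^ lk a i) = (sg a 1 :: 'k::field mpoly)"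
  by (simp add: Var_pow prod_single flip: monom_decomp)

lemma subst_Var: "subst Var p = p"
  unfolding subst_def Var_prod by (simp add: sg0_mult_single flip: poly_decomp)

lemma subst_Var_i: "subst \<sigma> (Var i) = \<sigma> i"
  by (simp add: subst_def Var_def)

definition closedI :: "nat \<Rightarrow> 'k::field mpoly set \<Rightarrow> bool" where
  "closedI N X \<longleftrightarrow> 0 \<in> X \<and> (\<forall>p\<in>X. \<forall>q\<in>X. p+q \<in> X) \<and> (\<forall>p\<in>X. \<forall>r\<in>polyring N. r*p \<in> X)"

lemma ig_least:
  assumes "closedI N X" "G \<subseteq> X"
  shows "ideal_gen N G \<subseteq> X"
proof
  fix p assume "p \<in> ideal_gen N G"
  then obtain F c where F: "finite F" "F \<subseteq> G" "\<forall>g\<in>F. c g \<in> polyring N" and p: "p = (\<Sum>g\<in>F. c g * g)"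
    unfolding ideal_gen_def by blast
  have "(\<Sum>g\<in>F. c g * g) \<in> X" using F
  proof (induction F rule: finite_induct)
    case empty then show ?case using assms(1) by (simp add: closedI_def)
  next
    case (insert x F)
    then show ?case using assms unfolding closedI_def by auto
  qed
  then show "p \<in> X" using p by simp
qed

lemma ig_intro: "finite F \<Longrightarrow> F \<subseteq> G \<Longrightarrow> (\<forall>g\<in>F. c g \<in> polyring N) \<Longrightarrow> p = (\<Sum>g\<in>F. c g * g) \<Longrightarrow> p \<in> ideal_gen N G"
  unfolding ideal_gen_def by auto

lemma ig_gen: "g \<in> G \<Longrightarrow> g \<in> ideal_gen N G"
  unfolding ideal_gen_def by (rule CollectI, rule exI[of _ "{g}"], rule exI[of _ "\<lambda>_. 1"]) simp

lemma ig_zero[simp]: "0 \<in> ideal_gen N G"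
  unfolding ideal_gen_def by (rule CollectI, rule exI[of _ "{}"]) simp

lemma ig_add: assumes "p \<in> ideal_gen N G" "q \<in> ideal_gen N G" shows "p + q \<in> ideal_gen N G"
proof -
  obtain F1 c1 where F1: "finite F1" "F1 \<subseteq> G" "\<forall>g\<in>F1. c1 g \<in> polyring N" and p: "p = (\<Sum>g\<in>F1. c1 g * g)"
    using assms(1) unfolding ideal_gen_def by blast
  obtain F2 c2 where F2: "finite F2" "F2 \<subseteq> G" "\<forall>g\<in>F2. c2 g \<in> polyring N" and q: "q = (\<Sum>g\<in>F2. c2 g * g)"
    using assms(2) unfolding ideal_gen_def by blast
  define c where "c g = (if g \<in> F1 then c1 g else 0) + (if g \<in> F2 then c2 g else 0)" for g
  have 1: "(\<Sum>g\<in>F1 \<union> F2. (if g \<in> F1 then c1 g else 0) * g) = p"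
    unfolding p using F1 F2 by (intro sum.mono_neutral_cong_right) auto
  have 2: "(\<Sum>g\<in>F1 \<union> F2. (if g \<in> F2 then c2 g else 0) * g) = q"
    unfolding q using F1 F2 by (intro sum.mono_neutral_cong_right) auto
  have "p + q = (\<Sum>g\<in>F1 \<union> F2. c g * g)"
    unfolding c_def distrib_right sum.distrib 1 2 by simp
  moreover have "\<forall>g\<in>F1 \<union> F2. c g \<in> polyring N"
    using F1 F2 by (auto simp: c_def intro!: polyring_add)
  ultimately show ?thesis using F1 F2 by (intro ig_intro[of "F1 \<union> F2" _ c]) auto
qed

lemma ig_mult: assumes "p \<in> ideal_gen N G" "r \<in> polyring N" shows "r * p \<in> ideal_gen N G"
proof -
  obtain F c where F: "finite F" "F \<subseteq> G" "\<forall>g\<in>F. c g \<in> polyring N" and p: "p = (\<Sum>g\<in>F. c g * g)"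
    using assms(1) unfolding ideal_gen_def by blast
  have "r * p = (\<Sum>g\<in>F. (r * c g) * g)" unfolding p by (simp add: sum_distrib_left mult.assoc)
  moreover have "\<forall>g\<in>F. r * c g \<in> polyring N" using F assms(2) by (simp add: polyring_mult)
  ultimately show ?thesis using F by (intro ig_intro[of F _ "\<lambda>g. r * c g"]) auto
qed

lemma ig_closed: "closedI N (ideal_gen N G)"
  by (simp add: closedI_def ig_add ig_mult)

lemma ig_uminus: "p \<in> ideal_gen N G \<Longrightarrow> - p \<in> ideal_gen N G"
  using ig_mult[of p N G "-1"] by (simp add: polyring_uminus)

lemma ig_diff: "p \<in> ideal_gen N G \<Longrightarrow> q \<in> ideal_gen N G \<Longrightarrow> p - q \<in> ideal_gen N G"
  by (metis diff_conv_add_uminus ig_add ig_uminus)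

lemma ig_sum: "(\<And>i. i \<in> I \<Longrightarrow> f i \<in> ideal_gen N G) \<Longrightarrow> (\<Sum>i\<in>I. f i) \<in> ideal_gen N G"
  by (induction I rule: infinite_finite_induct) (auto simp: ig_add)

lemma ig_lin: "(\<And>a. a \<in> ks p \<Longrightarrow> h a \<in> ideal_gen N G) \<Longrightarrow> lin h p \<in> ideal_gen N G"
  unfolding lin_def by (intro ig_sum ig_mult) (auto intro: polyring_single)

lemma ig_polyring: "G \<subseteq> polyring N \<Longrightarrow> ideal_gen N G \<subseteq> polyring N"
  by (rule ig_least) (auto simp: closedI_def polyring_add polyring_mult)

lemma ig_mono: "G \<subseteq> H \<Longrightarrow> ideal_gen N G \<subseteq> ideal_gen N H"
  by (rule ig_least[OF ig_closed]) (auto intro: ig_gen)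


lemma keys_empty_iff: "ks (p::'k::field mpoly) = {} \<longleftrightarrow> p = 0"
proof
  assume "ks p = {}" then show "p = 0" by (intro poly_mapping_eqI) (metis empty_iff in_keys_iff lookup_zero)
qed simp

lemma hpart_lin: "hpart d p = lin (\<lambda>a. if mdeg a = d then sg a 1 else 0) p"
proof -
  have "hpart d p = (\<Sum>a\<in>ks p. if mdeg a = d then sg a (lk p a) else 0)"
    unfolding hpart_def by (simp add: sum.inter_filter)
  also have "\<dots> = lin (\<lambda>a. if mdeg a = d then sg a 1 else 0) p"
    unfolding lin_def by (rule sum.cong) (auto simp: sg0_mult_single)
  finally show ?thesis .
qed

lemma hpart_sum: "hpart d (\<Sum>i\<in>I. f i) = (\<Sum>i\<in>I. hpart d (f i))"
  by (simp add: hpart_lin lin_sum)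

lemma hpart_polyring: "p \<in> polyring N \<Longrightarrow> hpart d p \<in> polyring N"
  unfolding hpart_lin by (rule polyring_lin) (auto simp: polyring_iff intro: polyring_single)

lemma hpart_mult2:
  assumes g: "homogeneous 2 g"
  shows "hpart d (c * g) = (if 2 \<le> d then hpart (d-2) c * g else 0)"
proof -
  have key: "lin (\<lambda>a. if mdeg (a + b) = d then sg (a + b) 1 else 0) c
     = (if 2 \<le> d then hpart (d-2) c * sg b 1 else 0)" if b: "b \<in> ks g" for b
  proof -
    have mb: "mdeg b = 2" using g b by (simp add: homogeneous_def)
    show ?thesis
    proof (cases "2 \<le> d")
      case True
      have "lin (\<lambda>a. if mdeg (a + b) = d then sg (a + b) 1 else 0) c
          = lin (\<lambda>a. (if mdeg a = d - 2 then sg a 1 else 0) * sg b 1) c"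
        using True by (intro lin_cong) (auto simp: mdeg_add mb mult_single)
      then show ?thesis using True by (simp add: hpart_lin lin_mult_right)
    next
      case False
      then show ?thesis by (simp add: mdeg_add mb)
    qed
  qed
  have "hpart d (c * g) = (\<Sum>b\<in>ks g. sg 0 (lk g b) * (if 2 \<le> d then hpart (d-2) c * sg b 1 else 0))"
    unfolding hpart_lin[of d] lin_mult_gen using key by (intro sum.cong) auto
  also have "\<dots> = (if 2 \<le> d then hpart (d-2) c * g else 0)"
  proof (cases "2 \<le> d")
    case True
    have "(\<Sum>b\<in>ks g. sg 0 (lk g b) * (hpart (d-2) c * sg b 1)) = hpart (d-2) c * (\<Sum>b\<in>ks g. sg b (lk g b))"
      unfolding sum_distrib_left by (rule sum.cong[OF refl]) (subst mult.left_commute, simp only: sg0_mult_single)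
    then show ?thesis using True by (simp flip: poly_decomp)
  qed simp
  finally show ?thesis .
qed

lemma ideal_deg:
  fixes G :: "'k::field mpoly set"
  assumes "\<forall>g\<in>G. \<forall>b\<in>ks g. k \<le> mdeg b" "p \<in> ideal_gen N G"
  shows "\<forall>a\<in>ks p. k \<le> mdeg a"
proof -
  define X where "X = {p::'k::field mpoly. \<forall>a\<in>ks p. k \<le> mdeg a}"
  have a: "p + q \<in> X" if "p \<in> X" "q \<in> X" for p q
    unfolding X_def
  proof (intro CollectI ballI)
    fix a assume "a \<in> ks (p + q)"
    then have "a \<in> ks p \<or> a \<in> ks q" using subsetD[OF keys_add[of p q]] by simp
    then show "k \<le> mdeg a" using that unfolding X_def by blast
  qed
  have m: "r * p \<in> X" if p: "p \<in> X" for p r :: "'k mpoly"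
    unfolding X_def
  proof (intro CollectI ballI)
    fix a assume "a \<in> ks (r * p)"
    then have "a \<in> {b + c |b c. b \<in> ks r \<and> c \<in> ks p}" using subsetD[OF keys_mult[of r p]] by simp
    then obtain b c where "a = b + c" "b \<in> ks r" "c \<in> ks p" by blast
    then have "k \<le> mdeg c" "mdeg a = mdeg b + mdeg c" using p unfolding X_def by (auto simp: mdeg_add)
    then show "k \<le> mdeg a" by simp
  qed
  have z: "0 \<in> X" unfolding X_def by simp
  have "closedI N X" unfolding closedI_def using a m z by blast
  moreover have "G \<subseteq> X" using assms(1) unfolding X_def by blast
  ultimately have "ideal_gen N G \<subseteq> X" by (rule ig_least)
  then show ?thesis using assms(2) unfolding X_def by blast
qed

lemma std_graded_gen:
  fixes G :: "'k::field mpoly set"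
  assumes G: "\<forall>g\<in>G. quadric N g"
  shows "std_graded N (ideal_gen N G)"
proof -
  let ?I = "ideal_gen N G"
  have Gp: "G \<subseteq> polyring N" using G by (auto simp: quadric_def)
  have isI: "is_ideal N ?I"
    unfolding is_ideal_def using ig_polyring[OF Gp] by (auto intro: ig_add ig_mult)
  have hom: "hpart d p \<in> ?I" if p: "p \<in> ?I" for p d
  proof -
    obtain F c where F: "finite F" "F \<subseteq> G" "\<forall>g\<in>F. c g \<in> polyring N" and pe: "p = (\<Sum>g\<in>F. c g * g)"
      using p unfolding ideal_gen_def by blast
    have hg: "homogeneous 2 g" if "g \<in> F" for g using G F that by (auto simp: quadric_def)
    have "hpart d p = (\<Sum>g\<in>F. if 2 \<le> d then hpart (d-2) (c g) * g else 0)"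
      unfolding pe hpart_sum by (rule sum.cong) (auto simp: hpart_mult2 hg)
    then show ?thesis
    proof (cases "2 \<le> d")
      case True
      then have "hpart d p = (\<Sum>g\<in>F. hpart (d-2) (c g) * g)" using \<open>hpart d p = _\<close> by simp
      then show ?thesis using F by (intro ig_intro[of F _ "\<lambda>g. hpart (d-2) (c g)"]) (auto intro: hpart_polyring)
    qed (simp add: \<open>hpart d p = _\<close>)
  qed
  have deg: "\<forall>g\<in>G. \<forall>b\<in>ks g. 2 \<le> mdeg b" using G by (auto simp: quadric_def homogeneous_def)
  have lin: "p = 0" if "p \<in> ?I" "linear_form N p" for p
  proof -
    have "\<forall>a\<in>ks p. 2 \<le> mdeg a" using ideal_deg[OF deg that(1)] .
    moreover have "\<forall>a\<in>ks p. mdeg a = 1" using that(2) by (auto simp: linear_form_def homogeneous_def)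
    ultimately have "ks p = {}" by fastforce
    then show ?thesis by (simp add: keys_empty_iff)
  qed
  show ?thesis unfolding std_graded_def homogeneous_ideal_def using isI hom lin by blast
qed


locale qsetup =
  fixes n m :: nat and q :: "nat \<Rightarrow> 'k::field mpoly"
  assumes quad: "\<forall>i<m. quadric n (q i)"
begin

definition rmon :: "monom \<Rightarrow> monom" where
  "rmon a = Abs_poly_mapping (\<lambda>k. if n \<le> k \<and> k < n+m then lk a k mod 2 else lk a k)"

definition xpart :: "monom \<Rightarrow> monom" where
  "xpart a = Abs_poly_mapping (\<lambda>k. if k < n then lk a k else 0)"

definition ypart :: "monom \<Rightarrow> monom" where
  "ypart a = Abs_poly_mapping (\<lambda>k. if n \<le> k then lk a k else 0)"

definition red :: "nat \<Rightarrow> monom \<Rightarrow> 'k mpoly" where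
  "red i a = (if \<exists>k<i. lk a (n+k) \<noteq> 0 then 0
     else sg (rmon a) 1 * (\<Prod>j\<in>{i..<m}. (- q j) ^ (lk a (n+j) div 2)))"

definition Nf :: "nat \<Rightarrow> 'k mpoly \<Rightarrow> 'k mpoly" where
  "Nf i = lin (red i)"

definition hc :: "monom \<Rightarrow> monom \<Rightarrow> 'k mpoly" where
  "hc b a = (if ypart a = b then sg (xpart a) 1 else 0)"

definition coef :: "monom \<Rightarrow> 'k mpoly \<Rightarrow> 'k mpoly" where
  "coef b = lin (hc b)"

definition reduced :: "nat \<Rightarrow> monom \<Rightarrow> bool" where
  "reduced i a \<longleftrightarrow> (\<forall>k<i. lk a (n+k) = 0) \<and> (\<forall>j<m. lk a (n+j) \<le> 1)"

definition ydeg :: "monom \<Rightarrow> nat" where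
  "ydeg a = (\<Sum>j<m. lk a (n+j))"

lemma q_poly: "j<m \<Longrightarrow> q j \<in> polyring n"
  using quad by (simp add: quadric_def)

lemma q_hom: "j<m \<Longrightarrow> homogeneous 2 (q j)"
  using quad by (simp add: quadric_def)

lemma q_keys: "j<m \<Longrightarrow> b \<in> ks (q j) \<Longrightarrow> ks b \<subseteq> {..<n}"
  using q_poly by (auto simp: polyring_iff)

lemma lk_out: "ks b \<subseteq> {..<n} \<Longrightarrow> n \<le> k \<Longrightarrow> lk b k = 0"
  by (metis lessThan_iff not_in_keys_iff_lookup_eq_zero not_le subsetD)

lemma lookup_rmon: "lk (rmon a) k = (if n \<le> k \<and> k < n+m then lk a k mod 2 else lk a k)"
proof -
  have "finite {k. (if n \<le> k \<and> k < n+m then lk a k mod 2 else lk a k) \<noteq> 0}"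
    by (rule finite_subset[of _ "ks a"]) (auto simp: in_keys_iff)
  then show ?thesis unfolding rmon_def by simp
qed

lemma lookup_xpart: "lk (xpart a) k = (if k < n then lk a k else 0)"
proof -
  have "finite {k. (if k < n then lk a k else 0) \<noteq> 0}"
    by (rule finite_subset[of _ "ks a"]) (auto simp: in_keys_iff)
  then show ?thesis unfolding xpart_def by simp
qed

lemma lookup_ypart: "lk (ypart a) k = (if n \<le> k then lk a k else 0)"
proof -
  have "finite {k. (if n \<le> k then lk a k else 0) \<noteq> 0}"
    by (rule finite_subset[of _ "ks a"]) (auto simp: in_keys_iff)
  then show ?thesis unfolding ypart_def by simp
qed

lemma xy: "xpart a + ypart a = a"
  by (rule poly_mapping_eqI) (simp add: lookup_add lookup_xpart lookup_ypart)

lemma keys_xpart: "ks (xpart a) \<subseteq> {..<n}"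
  by (auto simp: in_keys_iff lookup_xpart split: if_splits)

lemma rmon_x: assumes "ks b \<subseteq> {..<n}" shows "rmon (a + b) = rmon a + b"
  by (rule poly_mapping_eqI) (simp add: lookup_add lookup_rmon lk_out[OF assms])

lemma red_x: assumes b: "ks b \<subseteq> {..<n}" shows "red i (a + b) = sg b 1 * red i a"
proof -
  have l: "lk (a + b) (n+k) = lk a (n+k)" for k by (simp add: lookup_add lk_out[OF b])
  show ?thesis
  proof (cases "\<exists>k<i. lk a (n+k) \<noteq> 0")
    case True then show ?thesis by (simp add: red_def l)
  next
    case False
    have e: "sg (rmon a + b) 1 = sg b 1 * (sg (rmon a) 1 :: 'k mpoly)" by (simp add: mult_single add.commute)
    have nz: "\<not>(\<exists>k<i. lk a (n+k) \<noteq> 0)" using False .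
    show ?thesis unfolding red_def l rmon_x[OF b] if_not_P[OF nz] e by (simp only: mult.assoc)
  qed
qed

lemma red_y2:
  assumes ij: "i \<le> j" "j < m"
  shows "red i (a + sg (n+j) 2) = - q j * red i a"
proof -
  let ?e = "sg (n+j) (2::nat)"
  have le: "lk ?e k = (if k = n + j then 2 else 0)" for k by (simp add: lookup_single)
  have r: "rmon (a + ?e) = rmon a"
    by (rule poly_mapping_eqI) (use ij in \<open>auto simp: lookup_add lookup_rmon le\<close>)
  have c: "(\<exists>k<i. lk (a + ?e) (n+k) \<noteq> 0) \<longleftrightarrow> (\<exists>k<i. lk a (n+k) \<noteq> 0)"
  proof -
    have "\<forall>k<i. lk (a + ?e) (n+k) = lk a (n+k)" using ij by (auto simp: lookup_add le)
    then show ?thesis by auto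
  qed
  have fin: "finite {i..<m}" "j \<in> {i..<m}" using ij by auto
  have p: "(\<Prod>l\<in>{i..<m}. (- q l) ^ (lk (a + ?e) (n+l) div 2))
     = - q j * (\<Prod>l\<in>{i..<m}. (- q l) ^ (lk a (n+l) div 2))"
  proof -
    have "(\<Prod>l\<in>{i..<m}. (- q l) ^ (lk (a + ?e) (n+l) div 2))
        = (- q j) ^ (lk (a + ?e) (n+j) div 2) * (\<Prod>l\<in>{i..<m} - {j}. (- q l) ^ (lk (a + ?e) (n+l) div 2))"
      using fin by (simp add: prod.remove)
    also have "\<dots> = (- q j) * ((- q j) ^ (lk a (n+j) div 2) * (\<Prod>l\<in>{i..<m} - {j}. (- q l) ^ (lk a (n+l) div 2)))"
      by (simp add: lookup_add le)
    also have "\<dots> = - q j * (\<Prod>l\<in>{i..<m}. (- q l) ^ (lk a (n+l) div 2))"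
      using fin by (simp add: prod.remove)
    finally show ?thesis .
  qed
  show ?thesis
  proof (cases "\<exists>k<i. lk a (n+k) \<noteq> 0")
    case True
    then show ?thesis unfolding red_def c if_P[OF True] by simp
  next
    case False
    have F2: "\<not>(\<exists>k<i. lk (a + ?e) (n+k) \<noteq> 0)" using False c by simp
    show ?thesis unfolding red_def if_not_P[OF False] if_not_P[OF F2] r p by (simp only: ac_simps)
  qed
qed

lemma red_kill:
  assumes "k < i" "0 < lk c (n+k)"
  shows "red i (a + c) = 0"
proof -
  have "lk (a + c) (n+k) \<noteq> 0" using assms by (simp add: lookup_add)
  then show ?thesis using assms unfolding red_def by auto
qed

lemma red_reduced:
  assumes "reduced i a"
  shows "red i a = sg a 1"
proof -
  have r: "rmon a = a"
  proof (rule poly_mapping_eqI)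
    fix k
    show "lk (rmon a) k = lk a k"
    proof (cases "n \<le> k \<and> k < n+m")
      case True
      then obtain j where "k = n + j" "j < m" by (metis add_diff_inverse_nat add_less_cancel_left not_le)
      then have "lk a k \<le> 1" using assms by (simp add: reduced_def)
      then show ?thesis using True by (simp add: lookup_rmon)
    qed (auto simp: lookup_rmon)
  qed
  have p: "(\<Prod>j\<in>{i..<m}. (- q j) ^ (lk a (n+j) div 2)) = 1"
    by (rule prod.neutral) (use assms in \<open>auto simp: reduced_def\<close>)
  show ?thesis using assms unfolding red_def r p by (auto simp: reduced_def)
qed

lemma keys_rmon: "ks (rmon a) \<subseteq> ks a"
  by (auto simp: in_keys_iff lookup_rmon split: if_splits)

lemma red_keys:
  assumes a: "ks a \<subseteq> {..<n+m}" and i: "i \<le> m" and M: "M \<in> ks (red i a)"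
  shows "reduced i M \<and> ks M \<subseteq> {..<n+m} \<and> ypart M = ypart (rmon a)"
proof -
  let ?P = "(\<Prod>j\<in>{i..<m}. (- q j) ^ (lk a (n+j) div 2))"
  have nz: "\<not> (\<exists>k<i. lk a (n+k) \<noteq> 0)" using M by (auto simp: red_def split: if_splits)
  from M have Mk: "M \<in> ks (sg (rmon a) 1 * ?P)" unfolding red_def if_not_P[OF nz] .
  have Pp: "?P \<in> polyring n"
    by (rule polyring_prod) (auto intro!: polyring_pow polyring_uminus q_poly)
  have "M \<in> {x + b |x b. x \<in> ks (sg (rmon a) (1::'k)) \<and> b \<in> ks ?P}"
    using subsetD[OF keys_mult Mk] .
  then obtain b where Mb: "M = rmon a + b" and b: "b \<in> ks ?P" by auto
  have bk: "ks b \<subseteq> {..<n}" using Pp b by (simp add: polyring_iff)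
  have red: "reduced i M"
    unfolding reduced_def
  proof (intro conjI allI impI)
    fix k assume "k < i"
    then show "lk M (n+k) = 0" using nz i by (simp add: Mb lookup_add lk_out[OF bk] lookup_rmon)
  next
    fix j assume "j < m"
    then show "lk M (n+j) \<le> 1" by (simp add: Mb lookup_add lk_out[OF bk] lookup_rmon)
  qed
  have "ks M \<subseteq> ks (rmon a) \<union> ks b" unfolding Mb by (rule keys_add)
  also have "\<dots> \<subseteq> {..<n+m}" using keys_rmon[of a] a bk by auto
  finally have km: "ks M \<subseteq> {..<n+m}" .
  have "ypart M = ypart (rmon a)"
    by (rule poly_mapping_eqI) (simp add: lookup_ypart Mb lookup_add lk_out[OF bk])
  then show ?thesis using red km by simp
qed

lemma ydeg_ypart: "ypart M = ypart M' \<Longrightarrow> ydeg M = ydeg M'"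
proof -
  assume e: "ypart M = ypart M'"
  have "lk M (n+j) = lk M' (n+j)" for j
    using arg_cong[OF e, of "\<lambda>x. lk x (n+j)"] by (simp add: lookup_ypart)
  then show ?thesis by (simp add: ydeg_def)
qed

lemma ydeg_add: "ydeg (a + b) = ydeg a + ydeg b"
  by (simp add: ydeg_def lookup_add sum.distrib)

lemma ydeg_rmon_less:
  assumes "j < m" "2 \<le> lk a (n+j)"
  shows "ydeg (rmon a) < ydeg a"
  unfolding ydeg_def
proof (rule sum_strict_mono_ex1)
  show "\<forall>x\<in>{..<m}. lk (rmon a) (n + x) \<le> lk a (n + x)" by (simp add: lookup_rmon)
  show "\<exists>x\<in>{..<m}. lk (rmon a) (n + x) < lk a (n + x)"
    using assms by (intro bexI[of _ j]) (auto simp: lookup_rmon)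
qed simp

end


lemma lin_mult_left: "lin (\<lambda>a. c * h a) p = c * lin h p"
  using lin_mult_right[of h p c] by (simp add: mult.commute)

lemma lin_diff_fun: "lin (\<lambda>a. h a - h' a) p = lin h p - lin h' p"
  unfolding lin_def by (simp add: right_diff_distrib sum_subtractf)

lemma lin_sum_fun: "lin (\<lambda>a. \<Sum>b\<in>B. h b a) p = (\<Sum>b\<in>B. lin (h b) p)"
  unfolding lin_def by (simp add: sum_distrib_left sum.swap[of _ B])

lemma ig0: "ideal_gen N {0} \<subseteq> {0::'k::field mpoly}"
  by (rule ig_least) (auto simp: closedI_def)

context qsetup begin

abbreviation J where "J \<equiv> ideal_gen (n+m) ((\<lambda>i. Var (n + i) ^ 2 + q i) ` {..<m})"
abbreviation L where "L i \<equiv> ideal_gen (n+m) (J \<union> (\<lambda>i. Var (n+i)) ` {..<i})"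
abbreviation Q where "Q i \<equiv> ideal_gen n ({0} \<union> q ` {..<i})"

lemma Vy2: "Var (n+j) ^ 2 = (sg (sg (n+j) 2) 1 :: 'k mpoly)" by (simp add: Var_pow)
lemma Vy: "Var (n+j) = (sg (sg (n+j) 1) 1 :: 'k mpoly)" by (simp add: Var_def)

lemma lin_xonly:
  assumes h: "\<And>a b. ks b \<subseteq> {..<n} \<Longrightarrow> h (a + b) = sg b 1 * h a" and s: "s \<in> polyring n"
  shows "lin h (r * s) = s * lin h r"
proof -
  have "lin h (r*s) = (\<Sum>b\<in>ks s. sg 0 (lk s b) * lin (\<lambda>a. h (a+b)) r)" by (rule lin_mult_gen)
  also have "\<dots> = (\<Sum>b\<in>ks s. (sg 0 (lk s b) * sg b 1) * lin h r)"
  proof (intro sum.cong refl)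
    fix b assume "b \<in> ks s"
    then have "ks b \<subseteq> {..<n}" using s by (simp add: polyring_iff)
    then have "lin (\<lambda>a. h (a+b)) r = sg b 1 * lin h r" by (simp add: h lin_mult_left)
    then show "sg 0 (lk s b) * lin (\<lambda>a. h (a+b)) r = (sg 0 (lk s b) * sg b 1) * lin h r"
      by (simp add: mult.assoc)
  qed
  also have "\<dots> = (\<Sum>b\<in>ks s. sg b (lk s b)) * lin h r"
    by (simp add: sg0_mult_single sum_distrib_right)
  also have "\<dots> = s * lin h r" by (simp flip: poly_decomp)
  finally show ?thesis .
qed

lemma hc_x: assumes b: "ks b \<subseteq> {..<n}" shows "hc \<beta> (a + b) = sg b 1 * hc \<beta> a"
proof -
  have y: "ypart (a + b) = ypart a"
    by (rule poly_mapping_eqI) (simp add: lookup_ypart lookup_add lk_out[OF b])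
  have x: "xpart (a + b) = xpart a + b"
    by (rule poly_mapping_eqI) (auto simp: lookup_xpart lookup_add lk_out[OF b])
  show ?thesis unfolding hc_def y x by (simp add: mult_single add.commute)
qed

lemma N_x: "s \<in> polyring n \<Longrightarrow> Nf i (r * s) = s * Nf i r"
  unfolding Nf_def by (rule lin_xonly) (simp add: red_x)

lemma C_x: "s \<in> polyring n \<Longrightarrow> coef \<beta> (r * s) = s * coef \<beta> r"
  unfolding coef_def by (rule lin_xonly) (simp add: hc_x)

lemma N_y: "k < i \<Longrightarrow> Nf i (r * Var (n+k)) = 0"
  unfolding Nf_def Vy lin_mult_single_gen by (simp add: red_kill)

lemma N_y2: assumes "i \<le> j" "j < m" shows "Nf i (r * Var (n+j) ^ 2) = - q j * Nf i r"
proof -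
  have "lin (\<lambda>a. red i (a + sg (n+j) 2)) r = lin (\<lambda>a. (- q j) * red i a) r"
    by (rule lin_cong) (simp add: red_y2 assms)
  then show ?thesis unfolding Nf_def Vy2 lin_mult_single_gen lin_mult_left .
qed

lemma N_y2k: "j < i \<Longrightarrow> Nf i (r * Var (n+j) ^ 2) = 0"
  unfolding Nf_def Vy2 lin_mult_single_gen by (simp add: red_kill)

lemma hc_poly: "hc \<beta> a \<in> polyring n"
  unfolding hc_def using keys_xpart by (auto intro: polyring_single)

lemma coef_poly: "coef \<beta> p \<in> polyring n"
  unfolding coef_def by (rule polyring_lin) (rule hc_poly)

lemma N_keys:
  assumes "p \<in> polyring (n+m)" "i \<le> m" "M \<in> ks (Nf i p)"
  shows "reduced i M \<and> ks M \<subseteq> {..<n+m}"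
proof -
  have "M \<in> (\<Union>a\<in>ks p. ks (red i a))"
    using subsetD[OF keys_lin assms(3)[unfolded Nf_def]] .
  then obtain a where a: "a \<in> ks p" "M \<in> ks (red i a)" by blast
  have "ks a \<subseteq> {..<n+m}" using assms(1) a(1) by (simp add: polyring_iff)
  from red_keys[OF this assms(2) a(2)] show ?thesis by simp
qed

lemma N_poly: assumes "p \<in> polyring (n+m)" "i \<le> m" shows "Nf i p \<in> polyring (n+m)"
  unfolding polyring_iff[of "Nf i p"]
proof
  fix M assume "M \<in> ks (Nf i p)"
  from N_keys[OF assms this] show "ks M \<subseteq> {..<n+m}" by simp
qed

lemma y_poly: "j < m \<Longrightarrow> Var (n+j) \<in> polyring (n+m)"
  by (simp add: Var_polyring)

lemma y_in_L: "k < i \<Longrightarrow> Var (n+k) \<in> L i"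
  by (rule ig_gen) auto

lemma gg_in_J: "j < m \<Longrightarrow> Var (n+j) ^ 2 + q j \<in> J"
  by (rule ig_gen) auto

lemma gg_in_L: "j < m \<Longrightarrow> Var (n+j) ^ 2 + q j \<in> L i"
  by (rule ig_gen) (auto intro: gg_in_J)

lemma q_in_L: assumes "k < i" "i \<le> m" shows "q k \<in> L i"
proof -
  have e: "q k = (Var (n+k) ^ 2 + q k) - Var (n+k) * Var (n+k)" by (simp add: power2_eq_square)
  have A: "Var (n+k) ^ 2 + q k \<in> L i" using assms by (intro gg_in_L) simp
  have B: "Var (n+k) * Var (n+k) \<in> L i"
    using assms by (intro ig_mult y_in_L y_poly) simp_all
  show ?thesis by (subst e) (rule ig_diff[OF A B])
qed

lemma Q_sub_L: assumes "i \<le> m" shows "Q i \<subseteq> L i"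
proof (rule ig_least)
  have "r * p \<in> L i" if "p \<in> L i" "r \<in> polyring n" for p r
    using that by (intro ig_mult polyring_mono[of r n "n+m"]) simp_all
  then show "closedI n (L i)"
    unfolding closedI_def by (simp add: ig_add)
  show "{0} \<union> q ` {..<i} \<subseteq> L i" using q_in_L assms by auto
qed

end


context qsetup begin

lemma ydeg_single: "j < m \<Longrightarrow> ydeg (sg (n+j) c) = c"
proof -
  assume j: "j < m"
  have "ydeg (sg (n+j) c) = (\<Sum>l<m. if l = j then c else 0)"
    unfolding ydeg_def by (rule sum.cong) (auto simp: lookup_single when_def)
  also have "\<dots> = c" using j by simp
  finally show ?thesis .
qed

lemma split_monom:
  fixes a :: monom
  assumes "c \<le> lk a k"
  shows "a = (a - sg k c) + sg k c" and "ks (a - sg k c) \<subseteq> ks a"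
proof -
  show "a = (a - sg k c) + sg k c"
    by (rule poly_mapping_eqI) (use assms in \<open>auto simp: lookup_add minus_poly_mapping.rep_eq lookup_single when_def intro!: le_add_diff_inverse2[symmetric]\<close>)
  show "ks (a - sg k c) \<subseteq> ks a"
    by (auto simp: in_keys_iff minus_poly_mapping.rep_eq)
qed

lemma M1:
  assumes "i \<le> m" "ks a \<subseteq> {..<n+m}"
  shows "sg a 1 - red i a \<in> L i"
  using assms(2)
proof (induction "ydeg a" arbitrary: a rule: less_induct)
  case less
  show ?case
  proof (cases "\<exists>k<i. lk a (n+k) \<noteq> 0")
    case True
    then obtain k where k: "k < i" "lk a (n+k) \<noteq> 0" by blast
    let ?a = "a - sg (n+k) 1"
    have sp: "a = ?a + sg (n+k) 1" "ks ?a \<subseteq> ks a" using split_monom[of 1 a "n+k"] k by auto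
    have "red i a = 0" by (subst sp(1), rule red_kill[OF k(1)]) simp
    moreover have "sg a 1 = sg ?a 1 * (Var (n+k) :: 'k mpoly)"
      by (subst sp(1)) (simp add: Vy mult_single)
    moreover have "sg ?a 1 * (Var (n+k) :: 'k mpoly) \<in> L i"
      using sp(2) less.prems k by (intro ig_mult y_in_L polyring_single) auto
    ultimately show ?thesis by simp
  next
    case False
    note F = False
    show ?thesis
    proof (cases "\<exists>j<m. 2 \<le> lk a (n+j)")
      case True
      then obtain j where j: "j < m" "2 \<le> lk a (n+j)" by blast
      have ij: "i \<le> j"
      proof (rule ccontr)
        assume "\<not> i \<le> j"
        then have "j < i" by simp
        with F have "lk a (n+j) = 0" by blast
        with j show False by simp
      qed
      let ?a = "a - sg (n+j) 2"
      have sp: "a = ?a + sg (n+j) 2" "ks ?a \<subseteq> ks a" using split_monom[of 2 a "n+j"] j by auto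
      have ka: "ks ?a \<subseteq> {..<n+m}" using sp(2) less.prems by auto
      have yd: "ydeg ?a < ydeg a" using arg_cong[OF sp(1), of ydeg] j by (simp add: ydeg_add ydeg_single)
      have IH: "sg ?a 1 - red i ?a \<in> L i" using less.hyps[OF yd ka] .
      have r: "red i a = - q j * red i ?a" by (subst sp(1), rule red_y2[OF ij j(1)])
      have s: "sg a 1 = sg ?a 1 * (Var (n+j) ^ 2 :: 'k mpoly)"
        by (subst sp(1)) (simp add: Vy2 mult_single)
      have e: "sg a 1 - red i a = sg ?a 1 * (Var (n+j) ^ 2 + q j) - q j * (sg ?a 1 - red i ?a)"
        unfolding r s by (simp add: algebra_simps)
      have qp: "q j \<in> polyring (n+m)" using q_poly[OF j(1)] by (rule polyring_mono) simp
      show ?thesis unfolding e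
        by (intro ig_diff ig_mult gg_in_L IH qp polyring_single ka j(1))
    next
      case False
      then have "reduced i a" using F by (auto simp: reduced_def not_le)
      then show ?thesis by (simp add: red_reduced)
    qed
  qed
qed

lemma D1:
  assumes "f \<in> polyring (n+m)" "i \<le> m"
  shows "f - Nf i f \<in> L i"
proof -
  have "f - Nf i f = lin (\<lambda>a. sg a 1 - red i a) f"
    unfolding lin_diff_fun lin_id Nf_def ..
  also have "\<dots> \<in> L i"
    using assms by (intro ig_lin M1) (auto simp: polyring_iff)
  finally show ?thesis .
qed

lemma keys_ypart: "ks (ypart a) \<subseteq> ks a"
  by (auto simp: in_keys_iff lookup_ypart split: if_splits)

lemma decomp: "p = (\<Sum>\<beta>\<in>ypart ` ks p. coef \<beta> p * sg \<beta> 1)"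
proof -
  have "(\<Sum>\<beta>\<in>ypart ` ks p. coef \<beta> p * sg \<beta> 1) = lin (\<lambda>a. \<Sum>\<beta>\<in>ypart ` ks p. hc \<beta> a * sg \<beta> 1) p"
    unfolding lin_sum_fun coef_def lin_mult_right ..
  also have "\<dots> = lin (\<lambda>a. sg a 1) p"
  proof (rule lin_cong)
    fix a assume a: "a \<in> ks p"
    have "(\<Sum>\<beta>\<in>ypart ` ks p. hc \<beta> a * sg \<beta> 1) = (\<Sum>\<beta>\<in>ypart ` ks p. if ypart a = \<beta> then sg (xpart a) 1 * sg \<beta> 1 else 0)"
      unfolding hc_def by (rule sum.cong) auto
    also have "\<dots> = sg (xpart a) 1 * sg (ypart a) 1" using a by (simp add: sum.delta)
    also have "\<dots> = sg a 1" by (simp add: mult_single xy)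
    finally show "(\<Sum>\<beta>\<in>ypart ` ks p. hc \<beta> a * sg \<beta> 1) = sg a 1" .
  qed
  also have "\<dots> = p" by (rule lin_id)
  finally show ?thesis by simp
qed

lemma D2:
  assumes p: "p \<in> polyring (n+m)" and i: "i \<le> m" and c: "\<forall>\<beta>. coef \<beta> p \<in> Q i"
  shows "p \<in> L i"
proof -
  have "(\<Sum>\<beta>\<in>ypart ` ks p. coef \<beta> p * sg \<beta> 1) \<in> L i"
  proof (rule ig_sum)
    fix \<beta> assume "\<beta> \<in> ypart ` ks p"
    then obtain a where a: "a \<in> ks p" "\<beta> = ypart a" by blast
    have "ks \<beta> \<subseteq> {..<n+m}" using a keys_ypart[of a] p by (auto simp: polyring_iff)
    then have "sg \<beta> 1 * coef \<beta> p \<in> L i"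
      using c Q_sub_L[OF i] by (intro ig_mult polyring_single) auto
    then show "coef \<beta> p * sg \<beta> 1 \<in> L i" by (simp add: mult.commute)
  qed
  then show ?thesis using decomp[of p] by simp
qed

lemma Nf_add: "Nf i (p + p') = Nf i p + Nf i p'" by (simp add: Nf_def lin_add)
lemma coef_add: "coef b (p + p') = coef b p + coef b p'" by (simp add: coef_def lin_add)
lemma Nf_zero[simp]: "Nf i 0 = 0" by (simp add: Nf_def)
lemma coef_zero[simp]: "coef b 0 = 0" by (simp add: coef_def)

lemma D3:
  assumes P: "P \<in> L i" and i: "i \<le> m"
  shows "coef \<beta> (Nf i P) \<in> Q i"
proof -
  define X where "X = {P. \<forall>r \<beta>. coef \<beta> (Nf i (r * P)) \<in> Q i}"
  have cl: "closedI (n+m) X"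
    unfolding closedI_def
  proof (intro conjI ballI)
    show "0 \<in> X" unfolding X_def by simp
  next
    fix p p' assume p: "p \<in> X" and p': "p' \<in> X"
    show "p + p' \<in> X" unfolding X_def
    proof (intro CollectI allI)
      fix r \<beta>
      have "coef \<beta> (Nf i (r*p)) \<in> Q i" "coef \<beta> (Nf i (r*p')) \<in> Q i" using p p' unfolding X_def by blast+
      then show "coef \<beta> (Nf i (r*(p+p'))) \<in> Q i" unfolding distrib_left Nf_add coef_add by (rule ig_add)
    qed
  next
    fix p r assume p: "p \<in> X"
    show "r * p \<in> X" unfolding X_def
    proof (intro CollectI allI)
      fix r' \<beta>
      have "coef \<beta> (Nf i ((r' * r) * p)) \<in> Q i" using p unfolding X_def by blast
      then show "coef \<beta> (Nf i (r' * (r * p))) \<in> Q i" by (simp only: mult.assoc)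
    qed
  qed
  have gg: "Var (n+j) ^ 2 + q j \<in> X" if j: "j < m" for j
    unfolding X_def
  proof (intro CollectI allI)
    fix r \<beta>
    have e: "Nf i (r * (Var (n+j) ^ 2 + q j)) = Nf i (r * Var (n+j) ^ 2) + q j * Nf i r"
      by (simp add: distrib_left Nf_add N_x[OF q_poly[OF j]])
    show "coef \<beta> (Nf i (r * (Var (n+j) ^ 2 + q j))) \<in> Q i"
    proof (cases "i \<le> j")
      case True
      then show ?thesis unfolding e N_y2[OF True j] by simp
    next
      case False
      then have ji: "j < i" by simp
      have c1: "coef \<beta> (Nf i r * q j) = q j * coef \<beta> (Nf i r)" by (rule C_x[OF q_poly[OF j]])
      have "coef \<beta> (Nf i (r * (Var (n+j) ^ 2 + q j))) = coef \<beta> (Nf i r * q j)"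
        unfolding e N_y2k[OF ji] by (simp add: mult.commute)
      then have "coef \<beta> (Nf i (r * (Var (n+j) ^ 2 + q j))) = coef \<beta> (Nf i r) * q j"
        using c1 by (simp add: mult.commute)
      moreover have "coef \<beta> (Nf i r) * q j \<in> Q i"
        using False by (intro ig_mult ig_gen coef_poly) auto
      ultimately show ?thesis by simp
    qed
  qed
  have JX: "J \<subseteq> X" by (rule ig_least[OF cl]) (use gg in auto)
  have yX: "Var (n+k) \<in> X" if "k < i" for k
    unfolding X_def using that by (simp add: N_y)
  have "L i \<subseteq> X" by (rule ig_least[OF cl]) (use JX yX in auto)
  then have "P \<in> X" using P by auto
  then have "\<forall>r \<beta>. coef \<beta> (Nf i (r * P)) \<in> Q i" unfolding X_def by simp
  then have "coef \<beta> (Nf i (1 * P)) \<in> Q i" by blast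
  then show ?thesis by simp
qed

lemma G1:
  assumes "P \<in> J"
  shows "Nf 0 P = 0"
proof -
  have "P \<in> L 0" using assms by (intro ig_gen) simp
  then have c: "coef \<beta> (Nf 0 P) = 0" for \<beta>
    using D3[of P 0 \<beta>] ig0[of n] by auto
  show ?thesis by (subst decomp) (simp add: c)
qed

end


context qsetup begin

lemma yp_shift: "n \<le> k \<Longrightarrow> ypart (a + sg k c) = ypart a + sg k c"
  by (rule poly_mapping_eqI) (auto simp: lookup_ypart lookup_add lookup_single when_def)

lemma xp_shift: "n \<le> k \<Longrightarrow> xpart (a + sg k c) = xpart a"
  by (rule poly_mapping_eqI) (auto simp: lookup_xpart lookup_add lookup_single when_def)

lemma hc_shift: "n \<le> k \<Longrightarrow> hc \<beta> (a + sg k c) = (if ypart a + sg k c = \<beta> then sg (xpart a) 1 else 0)"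
  by (simp add: hc_def yp_shift xp_shift)

lemma yp_lk: "ypart x = \<beta> \<Longrightarrow> lk x (n+i) = lk \<beta> (n+i)"
  by (drule arg_cong[of _ _ "\<lambda>x. lk x (n+i)"]) (simp add: lookup_ypart)

lemma add_e_iff:
  fixes x \<beta> :: monom
  assumes "1 \<le> lk \<beta> k"
  shows "(x + sg k 1 = \<beta>) \<longleftrightarrow> (x = \<beta> - sg k 1)"
proof
  assume "x + sg k 1 = \<beta>" then show "x = \<beta> - sg k 1" by (metis add_diff_cancel_right')
next
  assume "x = \<beta> - sg k 1" then show "x + sg k 1 = \<beta>" using split_monom(1)[OF assms] by simp
qed

lemma coef_single: "coef \<beta> (sg a 1) = hc \<beta> a"
  by (simp add: coef_def lin_single)

lemma regular_step:
  assumes reg: "\<forall>f\<in>polyring n. q i * f \<in> Q i \<longrightarrow> f \<in> Q i"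
    and i: "i < m" and f: "f \<in> polyring (n+m)" and yf: "Var (n+i) * f \<in> L i"
  shows "f \<in> L i"
proof -
  define N where "N = Nf i f"
  define e where "e = sg (n+i) (1::nat)"
  have im: "i \<le> m" using i by simp
  have fN: "f - N \<in> L i" unfolding N_def by (rule D1[OF f im])
  have Np: "N \<in> polyring (n+m)" unfolding N_def by (rule N_poly[OF f im])
  have Nk: "reduced i a" "ks a \<subseteq> {..<n+m}" if "a \<in> ks N" for a
    using N_keys[OF f im that[unfolded N_def]] by auto
  have yN: "N * Var (n+i) \<in> L i"
  proof -
    have "Var (n+i) * N = Var (n+i) * f - Var (n+i) * (f - N)" by (simp add: algebra_simps)
    moreover have "Var (n+i) * (f - N) \<in> L i" using fN i by (intro ig_mult y_poly) auto
    ultimately have "Var (n+i) * N \<in> L i" using yf by (simp add: ig_diff)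
    then show ?thesis by (simp add: mult.commute)
  qed
  define T where "T = Nf i (N * Var (n+i))"
  have CT: "coef \<beta> T \<in> Q i" for \<beta> unfolding T_def by (rule D3[OF yN im])
  have Tc: "coef \<beta> T = lin (\<lambda>a. coef \<beta> (red i (a + e))) N" for \<beta>
    unfolding T_def Nf_def Vy lin_mult_single_gen coef_def[of \<beta>] lin_comp e_def ..
  have ne: "n \<le> n + i" by simp
  have le: "lk e k = (if k = n+i then 1 else 0)" for k by (simp add: e_def lookup_single when_def)
  have r0: "red i (a + e) = sg (a + e) 1" if "reduced i a" "lk a (n+i) = 0" for a
  proof -
    have "reduced i (a + e)" using that i unfolding reduced_def by (auto simp: lookup_add le)
    then show ?thesis by (rule red_reduced)
  qed
  have r1: "red i (a + e) = - q i * sg (a - e) 1" "a = (a - e) + e" "reduced i (a - e)" "lk (a - e) (n+i) = 0"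
    if "reduced i a" "lk a (n+i) = 1" for a
  proof -
    show ae: "a = (a - e) + e" unfolding e_def using that by (intro split_monom(1)) simp
    show ra: "reduced i (a - e)" using that unfolding reduced_def by (auto simp: minus_poly_mapping.rep_eq le)
    show "lk (a - e) (n+i) = 0" using that by (simp add: minus_poly_mapping.rep_eq le)
    have "a + e = (a - e) + sg (n+i) 2"
      by (subst (1) ae) (simp add: e_def add.assoc single_add[symmetric] numeral_2_eq_2)
    then have "red i (a + e) = - q i * red i (a - e)" using red_y2[of i i "a - e"] i by simp
    then show "red i (a + e) = - q i * sg (a - e) 1" using red_reduced[OF ra] by simp
  qed
  have cq: "coef \<beta> (- q i * sg x 1) = - q i * hc \<beta> x" for \<beta> x
  proof -
    have "- q i \<in> polyring n" using q_poly[OF i] by (rule polyring_uminus)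
    from C_x[OF this, of \<beta> "sg x 1"] show ?thesis by (simp add: mult.commute coef_single)
  qed
  have A: "coef \<beta> T = coef (\<beta> - e) N" if b1: "lk \<beta> (n+i) = 1" for \<beta>
    unfolding Tc coef_def[of "\<beta> - e"]
  proof (rule lin_cong)
    fix a assume a: "a \<in> ks N"
    have ri: "reduced i a" using Nk(1)[OF a] .
    have a01: "lk a (n+i) = 0 \<or> lk a (n+i) = 1" using ri i unfolding reduced_def by force
    show "coef \<beta> (red i (a + e)) = hc (\<beta> - e) a"
    proof (cases "lk a (n+i) = 0")
      case True
      have "coef \<beta> (red i (a + e)) = hc \<beta> (a + e)" using r0[OF ri True] by (simp add: coef_single)
      also have "\<dots> = (if ypart a = \<beta> - e then sg (xpart a) 1 else 0)"
        unfolding e_def hc_shift[OF ne] using add_e_iff[of "\<beta>" "n+i" "ypart a"] b1 by simp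
      also have "\<dots> = hc (\<beta> - e) a" by (simp add: hc_def)
      finally show ?thesis .
    next
      case False
      then have a1: "lk a (n+i) = 1" using a01 by simp
      have "coef \<beta> (red i (a + e)) = - q i * hc \<beta> (a - e)" using r1(1)[OF ri a1] cq by simp
      also have "hc \<beta> (a - e) = 0" using yp_lk[of "a - e" \<beta> i] r1(4)[OF ri a1] b1 by (auto simp: hc_def)
      also have "hc (\<beta> - e) a = 0"
        using yp_lk[of a "\<beta> - e" i] a1 b1 by (auto simp: hc_def minus_poly_mapping.rep_eq le)
      ultimately show ?thesis by simp
    qed
  qed
  have B: "coef \<beta> T = - q i * coef (\<beta> + e) N" if b0: "lk \<beta> (n+i) = 0" for \<beta>
    unfolding Tc coef_def[of "\<beta> + e"] lin_mult_left[symmetric]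
  proof (rule lin_cong)
    fix a assume a: "a \<in> ks N"
    have ri: "reduced i a" using Nk(1)[OF a] .
    have a01: "lk a (n+i) = 0 \<or> lk a (n+i) = 1" using ri i unfolding reduced_def by force
    show "coef \<beta> (red i (a + e)) = - q i * hc (\<beta> + e) a"
    proof (cases "lk a (n+i) = 0")
      case True
      have "coef \<beta> (red i (a + e)) = hc \<beta> (a + e)" using r0[OF ri True] by (simp add: coef_single)
      also have "hc \<beta> (a + e) = 0"
        using yp_lk[of "a + e" \<beta> i] True b0 by (auto simp: hc_def lookup_add le)
      also have "hc (\<beta> + e) a = 0"
        using yp_lk[of a "\<beta> + e" i] True b0 by (auto simp: hc_def lookup_add le)
      ultimately show ?thesis by simp
    next
      case False
      then have a1: "lk a (n+i) = 1" using a01 by simp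
      have "coef \<beta> (red i (a + e)) = - q i * hc \<beta> (a - e)" using r1(1)[OF ri a1] cq by simp
      also have "hc \<beta> (a - e) = hc (\<beta> + e) a"
      proof -
        have "hc (\<beta> + e) a = hc (\<beta> + e) ((a - e) + sg (n+i) 1)" using r1(2)[OF ri a1] by (simp add: e_def)
        also have "\<dots> = (if ypart (a - e) + e = \<beta> + e then sg (xpart (a - e)) 1 else 0)"
          unfolding hc_shift[OF ne] e_def ..
        also have "\<dots> = hc \<beta> (a - e)" by (simp add: hc_def)
        finally show ?thesis by simp
      qed
      finally show ?thesis .
    qed
  qed
  have CN: "coef \<gamma> N \<in> Q i" for \<gamma>
  proof -
    consider "lk \<gamma> (n+i) = 0" | "lk \<gamma> (n+i) = 1" | "2 \<le> lk \<gamma> (n+i)" by linarith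
    then show ?thesis
    proof cases
      case 1
      have "lk (\<gamma> + e) (n+i) = 1" using 1 by (simp add: lookup_add le)
      from A[OF this] have "coef (\<gamma> + e) T = coef \<gamma> N" by simp
      then show ?thesis using CT[of "\<gamma> + e"] by simp
    next
      case 2
      have g0: "lk (\<gamma> - e) (n+i) = 0" using 2 by (simp add: minus_poly_mapping.rep_eq le)
      have ge: "\<gamma> - e + e = \<gamma>" using split_monom(1)[of 1 \<gamma> "n+i"] 2 by (simp add: e_def)
      from B[OF g0] ge have "coef (\<gamma> - e) T = - q i * coef \<gamma> N" by simp
      then have "- q i * coef \<gamma> N \<in> Q i" using CT[of "\<gamma> - e"] by simp
      then have "q i * coef \<gamma> N \<in> Q i" using ig_uminus by fastforce
      then show ?thesis using reg coef_poly by blast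
    next
      case 3
      have "coef \<gamma> N = lin (\<lambda>a. 0) N" unfolding coef_def
      proof (rule lin_cong)
        fix a assume a: "a \<in> ks N"
        have "lk a (n+i) \<le> 1" using Nk(1)[OF a] i unfolding reduced_def by blast
        then show "hc \<gamma> a = 0" using yp_lk[of a \<gamma> i] 3 by (auto simp: hc_def)
      qed
      then show ?thesis by simp
    qed
  qed
  have "N \<in> L i" using D2[OF Np im] CN by blast
  from ig_add[OF fN this] show ?thesis by simp
qed

end


lemma zero_le_monom: "(0::monom) \<le> a"
proof (cases "a = 0")
  case True then show ?thesis by simp
next
  case False
  have "\<exists>k. lk a k \<noteq> 0"
  proof (rule ccontr)
    assume "\<not> (\<exists>k. lk a k \<noteq> 0)"
    then have "a = 0" by (intro poly_mapping_eqI) simp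
    with False show False by simp
  qed
  then obtain k where k: "lk a k \<noteq> 0" by blast
  define k0 where "k0 = (LEAST k. lk a k \<noteq> 0)"
  have "lk a k0 \<noteq> 0" using LeastI[of "\<lambda>k. lk a k \<noteq> 0" k] k by (simp add: k0_def)
  moreover have "\<forall>k'<k0. lk a k' = 0" using not_less_Least k0_def by blast
  ultimately have "less_fun (lk 0) (lk a)" unfolding less_fun_def by (intro exI[of _ k0]) auto
  then show ?thesis by (simp add: less_eq_poly_mapping.rep_eq)
qed

lemma subst_lin: "subst \<sigma> p = lin (\<lambda>a. \<Prod>i\<in>ks a. \<sigma> i ^ lk a i) p"
  by (simp add: subst_def lin_def)

context qsetup begin

definition tord :: "monom \<Rightarrow> monom \<Rightarrow> bool" where
  "tord a b \<longleftrightarrow> ydeg a < ydeg b \<or> (ydeg a = ydeg b \<and> a \<le> b)"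

lemma tord_antisym: "tord a b \<Longrightarrow> tord b a \<Longrightarrow> a = b"
  unfolding tord_def by auto

lemma term_order_tord: "term_order (n+m) tord"
  unfolding term_order_def Let_def
proof (intro conjI ballI impI)
  fix a show "tord a a" by (simp add: tord_def)
next
  fix a b assume "tord a b \<and> tord b a" then show "a = b" using tord_antisym by blast
next
  fix a b c assume "tord a b \<and> tord b c" then show "tord a c" unfolding tord_def by auto
next
  fix a b show "tord a b \<or> tord b a" unfolding tord_def by auto
next
  fix a show "tord 0 a" unfolding tord_def using zero_le_monom[of a] by (auto simp: ydeg_def)
next
  fix a b c assume "tord a b" then show "tord (a + c) (b + c)"
    unfolding tord_def by (auto simp: ydeg_add add_right_mono)
qed

lemma lead_eq:
  assumes "M \<in> ks p" "\<forall>m'\<in>ks p. tord m' M"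
  shows "lead_monom tord p = M"
  unfolding lead_monom_def
proof (rule the_equality)
  show "M \<in> ks p \<and> (\<forall>m'\<in>ks p. tord m' M)" using assms by simp
  fix x assume "x \<in> ks p \<and> (\<forall>m'\<in>ks p. tord m' x)"
  then show "x = M" using assms tord_antisym by blast
qed

lemma lead_exists:
  assumes "p \<noteq> 0"
  shows "\<exists>M\<in>ks p. \<forall>m'\<in>ks p. tord m' M"
proof -
  have ne: "ks p \<noteq> {}" using assms by (simp add: keys_empty_iff)
  define D where "D = Max (ydeg ` ks p)"
  have D: "D \<in> ydeg ` ks p" "\<forall>a\<in>ks p. ydeg a \<le> D" using ne by (auto simp: D_def)
  define S where "S = {a\<in>ks p. ydeg a = D}"
  have Sne: "S \<noteq> {}" "finite S" using D(1) by (auto simp: S_def)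
  define M where "M = Max S"
  have M: "M \<in> S" "\<forall>a\<in>S. a \<le> M" using Sne by (auto simp: M_def)
  show ?thesis
  proof (intro bexI ballI)
    show "M \<in> ks p" using M(1) by (simp add: S_def)
    fix m' assume m': "m' \<in> ks p"
    show "tord m' M"
    proof (cases "ydeg m' = D")
      case True then show ?thesis using M m' by (auto simp: tord_def S_def)
    next
      case False then show ?thesis using M m' D(2) by (auto simp: tord_def S_def order.strict_iff_order)
    qed
  qed
qed

lemma ydeg_xonly: "ks b \<subseteq> {..<n} \<Longrightarrow> ydeg b = 0"
  by (simp add: ydeg_def lk_out)

lemma gg_poly: "j < m \<Longrightarrow> Var (n+j) ^ 2 + q j \<in> polyring (n+m)"
  by (intro polyring_add polyring_pow y_poly polyring_mono[OF q_poly]) auto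

lemma J_poly: "J \<subseteq> polyring (n+m)"
  by (rule ig_polyring) (auto intro: gg_poly)

lemma L_poly: assumes "i \<le> m" shows "L i \<subseteq> polyring (n+m)"
proof (rule ig_polyring)
  have "Var (n+k) \<in> polyring (n+m)" if "k < i" for k using that assms by (intro y_poly) simp
  then show "J \<union> (\<lambda>i. Var (n+i)) ` {..<i} \<subseteq> polyring (n+m)" using J_poly by auto
qed

lemma gg_lead:
  assumes j: "j < m"
  shows "Var (n+j) ^ 2 + q j \<noteq> 0" "lead_monom tord (Var (n+j) ^ 2 + q j) = sg (n+j) 2"
proof -
  let ?E = "sg (n+j) (2::nat)"
  have Eq: "?E \<notin> ks (q j)"
  proof
    assume "?E \<in> ks (q j)"
    then have "ks ?E \<subseteq> {..<n}" using q_keys[OF j] by blast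
    then show False by simp
  qed
  have E: "?E \<in> ks (Var (n+j) ^ 2 + q j)"
    using Eq by (simp add: Vy2 in_keys_iff lookup_add)
  then show "Var (n+j) ^ 2 + q j \<noteq> 0" by auto
  have yE: "ydeg ?E = 2" using j by (simp add: ydeg_single)
  have "\<forall>m'\<in>ks (Var (n+j) ^ 2 + q j). tord m' ?E"
  proof
    fix m' assume "m' \<in> ks (Var (n+j) ^ 2 + q j)"
    then have "m' \<in> ks (sg ?E (1::'k)) \<union> ks (q j)" using keys_add[of "sg ?E (1::'k)" "q j"] by (auto simp: Vy2)
    then show "tord m' ?E"
    proof
      assume "m' \<in> ks (sg ?E (1::'k))" then show ?thesis by (simp add: tord_def)
    next
      assume "m' \<in> ks (q j)"
      then have "ydeg m' = 0" using q_keys[OF j] ydeg_xonly by blast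
      then show ?thesis using yE by (simp add: tord_def)
    qed
  qed
  then show "lead_monom tord (Var (n+j) ^ 2 + q j) = ?E" using lead_eq E by blast
qed

lemma GB_lead:
  assumes f: "f \<in> J" "f \<noteq> 0"
  shows "\<exists>j<m. \<exists>u. lead_monom tord f = sg (n+j) 2 + u"
proof -
  obtain M where M: "M \<in> ks f" "\<forall>m'\<in>ks f. tord m' M" using lead_exists[OF f(2)] by blast
  have lM: "lead_monom tord f = M" using lead_eq[OF M] .
  have fp: "f \<in> polyring (n+m)" using J_poly f(1) by auto
  have "\<exists>j<m. 2 \<le> lk M (n+j)"
  proof (rule ccontr)
    assume "\<not> (\<exists>j<m. 2 \<le> lk M (n+j))"
    then have rM: "reduced 0 M" by (auto simp: reduced_def)
    have N0: "Nf 0 f = 0" using G1[OF f(1)] .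
    have z: "lk f a * lk (red 0 a) M = (if a = M then lk f M else 0)" if a: "a \<in> ks f" for a
    proof (cases "a = M")
      case True then show ?thesis using red_reduced[OF rM] by simp
    next
      case False
      have ka: "ks a \<subseteq> {..<n+m}" using fp a by (simp add: polyring_iff)
      have "lk (red 0 a) M = 0"
      proof (cases "\<forall>j<m. lk a (n+j) \<le> 1")
        case True
        then have "reduced 0 a" by (simp add: reduced_def)
        then show ?thesis using False by (simp add: red_reduced lookup_single when_def)
      next
        case nr: False
        then obtain j where j: "j < m" "2 \<le> lk a (n+j)" by (auto simp: not_le)
        show ?thesis
        proof (rule ccontr)
          assume "lk (red 0 a) M \<noteq> 0"
          then have "M \<in> ks (red 0 a)" by (simp add: in_keys_iff)
          then have "ypart M = ypart (rmon a)" using red_keys[of a 0 M] ka by simp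
          then have "ydeg M = ydeg (rmon a)" by (rule ydeg_ypart)
          also have "\<dots> < ydeg a" using ydeg_rmon_less[OF j] .
          finally have "ydeg M < ydeg a" .
          moreover have "tord a M" using M(2) a by blast
          ultimately show False by (auto simp: tord_def)
        qed
      qed
      then show ?thesis using False by simp
    qed
    have "lk (Nf 0 f) M = (\<Sum>a\<in>ks f. lk f a * lk (red 0 a) M)" by (simp add: Nf_def lookup_lin)
    also have "\<dots> = (\<Sum>a\<in>ks f. if a = M then lk f M else 0)" by (rule sum.cong) (auto simp: z)
    also have "\<dots> = lk f M" using M(1) by simp
    finally have "lk f M = 0" using N0 by simp
    then show False using M(1) by (simp add: in_keys_iff)
  qed
  then obtain j where j: "j < m" "2 \<le> lk M (n+j)" by blast
  have "M = (M - sg (n+j) 2) + sg (n+j) 2" using split_monom(1)[OF j(2)] .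
  then have "lead_monom tord f = sg (n+j) 2 + (M - sg (n+j) 2)" using lM by (simp add: add.commute)
  then show ?thesis using j(1) by blast
qed

end


lemma linear_Var: "i < N \<Longrightarrow> linear_form N (Var i :: 'k::field mpoly)"
  unfolding linear_form_def by (intro conjI Var_polyring) (simp_all add: homogeneous_def Var_def)

lemma linear_zero: "linear_form N (0 :: 'k::field mpoly)"
  by (simp add: linear_form_def homogeneous_def)

lemma set_take_map: "i \<le> m \<Longrightarrow> set (take i (map f [0..<m])) = f ` {..<i}"
  by (simp add: take_map atLeast0LessThan min_def)

context qsetup begin

abbreviation I where "I \<equiv> ideal_gen n (q ` {..<m})"

definition psi :: "nat \<Rightarrow> 'k mpoly" where "psi i = (if i < n then Var i else 0)"

lemma subst_psi:
  assumes "P \<in> polyring (n+m)"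
  shows "subst psi P = Nf m P"
  unfolding subst_lin Nf_def
proof (rule lin_cong)
  fix a assume a: "a \<in> ks P"
  have ka: "ks a \<subseteq> {..<n+m}" using assms a by (simp add: polyring_iff)
  show "(\<Prod>i\<in>ks a. psi i ^ lk a i) = red m a"
  proof (cases "\<exists>k<m. lk a (n+k) \<noteq> 0")
    case True
    then obtain k where k: "k<m" "lk a (n+k) \<noteq> 0" by blast
    have "n+k \<in> ks a" using k by (simp add: in_keys_iff)
    moreover have "psi (n+k) ^ lk a (n+k) = 0" using k by (simp add: psi_def)
    ultimately have "(\<Prod>i\<in>ks a. psi i ^ lk a i) = 0" by (intro prod_zero) auto
    moreover have "red m a = 0" unfolding red_def if_P[OF True] ..
    ultimately show ?thesis by simp
  next
    case False
    then have ra: "reduced m a" by (auto simp: reduced_def)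
    have kx: "i < n" if i: "i \<in> ks a" for i
    proof (rule ccontr)
      assume "\<not> i < n"
      then have "i = n + (i - n)" "i - n < m" using ka i by auto
      then have "lk a i = 0" using False by (metis)
      then show False using i by (simp add: in_keys_iff)
    qed
    have "(\<Prod>i\<in>ks a. psi i ^ lk a i) = (\<Prod>i\<in>ks a. Var i ^ lk a i)"
      by (rule prod.cong) (use kx in \<open>auto simp: psi_def\<close>)
    also have "\<dots> = sg a 1" by (rule Var_prod)
    finally show ?thesis using red_reduced[OF ra] by simp
  qed
qed

lemma Nf_m_coef:
  assumes "P \<in> polyring (n+m)"
  shows "coef 0 (Nf m P) = Nf m P"
proof -
  have "coef 0 (Nf m P) = lin (\<lambda>a. sg a 1) (Nf m P)"
    unfolding coef_def
  proof (rule lin_cong)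
    fix a assume a: "a \<in> ks (Nf m P)"
    have ra: "reduced m a" and ka: "ks a \<subseteq> {..<n+m}" using N_keys[OF assms le_refl a] by auto
    have z: "lk a k = 0" if "n \<le> k" for k
    proof (cases "k < n+m")
      case True
      then have "k = n + (k - n)" "k - n < m" using that by auto
      then show ?thesis using ra unfolding reduced_def by metis
    next
      case False
      then have "k \<notin> ks a" using ka by auto
      then show ?thesis by (simp add: in_keys_iff)
    qed
    have "ypart a = 0" by (rule poly_mapping_eqI) (simp add: lookup_ypart z)
    moreover have "xpart a = a" by (rule poly_mapping_eqI) (simp add: lookup_xpart z)
    ultimately show "hc 0 a = sg a 1" by (simp add: hc_def)
  qed
  then show ?thesis by (simp add: lin_id)
qed

lemma Q_sub_I: "Q m \<subseteq> I"
  by (rule ig_least[OF ig_closed]) (auto intro: ig_gen)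

lemma I_sub_L: "I \<subseteq> L m"
  using ig_mono[of "q ` {..<m}" "{0} \<union> q ` {..<m}" n] Q_sub_L[of m] by auto

lemma L_to_I:
  assumes "P \<in> L m"
  shows "subst psi P \<in> I"
proof -
  have Pp: "P \<in> polyring (n+m)" using L_poly[of m] assms by auto
  have "coef 0 (Nf m P) \<in> Q m" by (rule D3[OF assms le_refl])
  then show ?thesis using subst_psi[OF Pp] Nf_m_coef[OF Pp] Q_sub_I by auto
qed

lemma iso: "graded_iso n I (n+m) (L m)"
proof -
  have 1: "\<forall>i<n. linear_form (n+m) (Var i :: 'k mpoly)" by (auto intro: linear_Var)
  have 2: "\<forall>i<n+m. linear_form n (psi i)"
  proof (intro allI impI)
    fix i assume "i < n+m" then show "linear_form n (psi i)"
      by (cases "i < n") (simp_all add: psi_def linear_Var linear_zero)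
  qed
  have 3: "subst Var ` I \<subseteq> L m" using I_sub_L by (simp add: subst_Var)
  have 4: "subst psi ` L m \<subseteq> I" using L_to_I by auto
  have 5: "\<forall>i<n. subst psi (Var i) - Var i \<in> I" by (simp add: subst_Var_i psi_def)
  have 6: "\<forall>i<n+m. subst Var (psi i) - Var i \<in> L m"
  proof (intro allI impI)
    fix i assume i: "i < n+m"
    show "subst Var (psi i) - Var i \<in> L m"
    proof (cases "i < n")
      case True then show ?thesis by (simp add: psi_def subst_Var)
    next
      case False
      then have "i = n + (i - n)" "i - n < m" using i by auto
      then have "Var i \<in> L m" using y_in_L[of "i - n" m] by simp
      then show ?thesis using False by (simp add: psi_def subst_Var ig_uminus)
    qed
  qed
  show ?thesis unfolding graded_iso_def using 1 2 3 4 5 6 by blast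
qed

lemma gg_quadric: "j < m \<Longrightarrow> quadric (n+m) (Var (n+j) ^ 2 + q j)"
proof -
  assume j: "j < m"
  have "homogeneous 2 (Var (n+j) ^ 2 + q j)" unfolding homogeneous_def
  proof
    fix b assume "b \<in> ks (Var (n+j) ^ 2 + q j)"
    then have "b \<in> ks (sg (sg (n+j) 2) (1::'k)) \<union> ks (q j)"
      using keys_add[of "sg (sg (n+j) 2) (1::'k)" "q j"] by (auto simp: Vy2)
    then show "mdeg b = 2" using q_hom[OF j] by (auto simp: homogeneous_def)
  qed
  then show ?thesis using gg_poly[OF j] by (simp add: quadric_def)
qed

lemma GQ: "G_quadratic (n+m) J"
  unfolding G_quadratic_def
proof (intro conjI exI[of _ Var] exI[of _ tord] exI[of _ "(\<lambda>i. Var (n + i) ^ 2 + q i) ` {..<m}"])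
  show "std_graded (n+m) J" by (rule std_graded_gen) (auto intro: gg_quadric)
  show "coord_change (n+m) Var" unfolding coord_change_def
    by (intro conjI allI impI exI[of _ Var]) (simp_all add: linear_Var subst_Var)
  show "term_order (n+m) tord" by (rule term_order_tord)
  show "\<forall>g\<in>(\<lambda>i. Var (n + i) ^ 2 + q i) ` {..<m}. quadric (n+m) g" by (auto intro: gg_quadric)
  have sJ: "subst Var ` J = J" by (simp add: subst_Var)
  show "groebner_basis tord ((\<lambda>i. Var (n + i) ^ 2 + q i) ` {..<m}) (subst Var ` J)"
    unfolding groebner_basis_def sJ
  proof (intro conjI ballI impI)
    show "finite ((\<lambda>i. Var (n + i) ^ 2 + q i) ` {..<m})" by simp
    show "(\<lambda>i. Var (n + i) ^ 2 + q i) ` {..<m} \<subseteq> J" using gg_in_J by auto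
    fix f assume f: "f \<in> J" "f \<noteq> 0"
    obtain j u where j: "j < m" "lead_monom tord f = sg (n+j) 2 + u" using GB_lead[OF f] by blast
    show "\<exists>g\<in>(\<lambda>i. Var (n + i) ^ 2 + q i) ` {..<m}. g \<noteq> 0 \<and> (\<exists>u. lead_monom tord f = lead_monom tord g + u)"
      using j gg_lead[OF j(1)] by (intro bexI[of _ "Var (n + j) ^ 2 + q j"]) auto
  qed
qed

lemma one_notin: "1 \<notin> ideal_gen (n+m) (J \<union> (\<lambda>i. Var (n+i)) ` {..<m})"
proof
  have Jd: "\<forall>a\<in>ks p. 2 \<le> mdeg a" if "p \<in> J" for p
    using ideal_deg[OF _ that] gg_quadric by (auto simp: quadric_def homogeneous_def)
  have G: "\<forall>g\<in>J \<union> (\<lambda>i. Var (n+i)) ` {..<m}. \<forall>b\<in>ks g. 1 \<le> mdeg b"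
  proof
    fix g assume "g \<in> J \<union> (\<lambda>i. Var (n+i)) ` {..<m}"
    then show "\<forall>b\<in>ks g. 1 \<le> mdeg b"
    proof
      assume "g \<in> J" then show ?thesis using Jd by fastforce
    qed (auto simp: Var_def)
  qed
  assume "1 \<in> ideal_gen (n+m) (J \<union> (\<lambda>i. Var (n+i)) ` {..<m})"
  from ideal_deg[OF G this] show False by simp
qed

lemma regseq:
  assumes reg: "regular_seq n {0} (map q [0..<m])"
  shows "regular_seq (n+m) J (map (\<lambda>i. Var (n+i)) [0..<m])"
  unfolding regular_seq_def
proof (intro conjI allI impI ballI)
  show "set (map (\<lambda>i. Var (n + i)) [0..<m]) \<subseteq> polyring (n + m)" using y_poly by auto
  show "1 \<notin> ideal_gen (n + m) (J \<union> set (map (\<lambda>i. Var (n + i)) [0..<m]))"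
    using one_notin by (simp add: atLeast0LessThan)
next
  fix i f
  assume i: "i < length (map (\<lambda>i. Var (n + i)) [0..<m])" and f: "f \<in> polyring (n+m)"
    and h: "map (\<lambda>i. Var (n + i)) [0..<m] ! i * f
       \<in> ideal_gen (n + m) (J \<union> set (take i (map (\<lambda>i. Var (n + i)) [0..<m])))"
  have im: "i < m" using i by simp
  have st: "set (take i (map (\<lambda>i. Var (n + i)) [0..<m])) = (\<lambda>i. Var (n + i)) ` {..<i}"
    using im by (simp add: set_take_map)
  have regi: "\<forall>f\<in>polyring n. q i * f \<in> Q i \<longrightarrow> f \<in> Q i"
  proof -
    have "\<forall>f\<in>polyring n. map q [0..<m] ! i * f \<in> ideal_gen n ({0} \<union> set (take i (map q [0..<m])))
       \<longrightarrow> f \<in> ideal_gen n ({0} \<union> set (take i (map q [0..<m])))"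
      using reg im unfolding regular_seq_def by simp
    moreover have "set (take i (map q [0..<m])) = q ` {..<i}" using im by (simp add: set_take_map)
    ultimately show ?thesis using im by simp
  qed
  have e: "map (\<lambda>i. Var (n + i)) [0..<m] ! i = Var (n+i)" using im by simp
  have "Var (n+i) * f \<in> L i" using h unfolding e st .
  from regular_step[OF regi im f this] show "f \<in> ideal_gen (n + m) (J \<union> set (take i (map (\<lambda>i. Var (n + i)) [0..<m])))"
    unfolding st .
qed

end

theorem mainTheorem2:
  fixes q :: "nat \<Rightarrow> 'k::field mpoly" and n m :: nat
  assumes quad: "\<forall>i<m. quadric n (q i)"
    and reg: "regular_seq n {0} (map q [0..<m])"
  shows "LG_quadratic n (ideal_gen n (q ` {..<m}))
    \<and> G_quadratic (n + m) (ideal_gen (n + m) ((\<lambda>i. Var (n + i) ^ 2 + q i) ` {..<m}))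
    \<and> regular_seq (n + m) (ideal_gen (n + m) ((\<lambda>i. Var (n + i) ^ 2 + q i) ` {..<m}))
        (map (\<lambda>i. Var (n + i)) [0..<m])
    \<and> graded_iso n (ideal_gen n (q ` {..<m})) (n + m)
        (ideal_gen (n + m) (ideal_gen (n + m) ((\<lambda>i. Var (n + i) ^ 2 + q i) ` {..<m})
                             \<union> (\<lambda>i. Var (n + i)) ` {..<m}))"
proof -
  interpret qsetup n m q using quad by unfold_locales
  have sg: "std_graded n (ideal_gen n (q ` {..<m}))"
    by (rule std_graded_gen) (use quad in auto)
  have ys: "set (map (\<lambda>i. Var (n + i)) [0..<m]) = (\<lambda>i. Var (n + i)) ` {..<m}"
    by (simp add: atLeast0LessThan)
  have lf: "\<forall>y\<in>set (map (\<lambda>i. Var (n + i)) [0..<m]). linear_form (n+m) y"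
    by (auto intro: linear_Var)
  have iso': "graded_iso n (ideal_gen n (q ` {..<m})) (n+m) (ideal_gen (n+m) (ideal_gen (n + m) ((\<lambda>i. Var (n + i) ^ 2 + q i) ` {..<m}) \<union> set (map (\<lambda>i. Var (n + i)) [0..<m])))"
    unfolding ys by (rule iso)
  have LG: "LG_quadratic n (ideal_gen n (q ` {..<m}))"
    unfolding LG_quadratic_def using sg GQ lf regseq[OF reg] iso' by blast
  show ?thesis using LG GQ regseq[OF reg] iso by simp
qed


end
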